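(* Let $W_{-1}$ be the $2\pi$-periodic function given on $[-\pi,\pi]$ by $W_{-1}(x)=|\sin x|\sin^2(x/2)$ for $|x|\le\frac{2\pi}{3}$ and $W_{-1}(x)=\frac{3\sqrt3}{8}$ for $\frac{2\pi}3\le|x|\le\pi$. For $\theta\in(0,1)$ let $W_\theta=W_{-1}\widetilde W_\theta$, where $\widetilde W_\theta$ is the $2\pi$-periodic function equal to $\exp(C|x|/\theta)$ on $[-\pi,\pi]$ for a suitable large constant $C>0$. Then for any $0<\theta<\theta'<1$, if $\delta^*>0$ is small enough, the following holds. Let $0\le s_0\le s_1$, let $\eta$ be a given continuous function on $[s_0,s_1]\times\mathbb R$, let $x^*$ solve $$\frac{dx^*}{ds}=-\sin(x^*(s))+\int_{-\pi-x^*(s)}^0\eta(s,\bar y)\,d\bar y,\qquad x^*(s_0)=x^*_{s_0},$$ set $\Omega^*(s)=[-\pi-x^*(s),\pi-x^*(s)]$, $\Omega^*_{s_0}=\Omega^*(s_0)$, and assume $|x^*(s)|\le\delta^*$ and $\|\eta(s,\cdot)\|_{L^\infty(\Omega^*(s))}\le\delta^*$ for $s\in[s_0,s_1]$. Denote by $\bar S(s,s_0)u_0$ the solution of $$\partial_su-2\cos(y)u+\sin(y)\partial_yu+\Big(\int_0^y\eta(s,\bar y)\,d\bar y\Big)\partial_yu=0\ \text{ on }\Omega^*(s),\ s\in[s_0,s_1],\qquad u(s_0)=u_0\ \text{on }\Omega^*_{s_0}.$$ Then for all $s\in[s_0,s_1]$, $$\Big\|\frac{\bar S(s,s_0)u_0}{W_\theta}\Big\|_{L^\infty(\Omega^*(s))}\le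 e^{-(1-\theta')(s-s_0)}\Big\|\frac{u_0}{W_\theta}\Big\|_{L^\infty(\Omega^*_{s_0})}.$$
   Context: $\Omega^*(s)$ is the image of $\Omega^*_{s_0}$ under the characteristic flow $\frac{dY}{ds}=\sin Y+\int_0^Y\eta(s,\bar y)d\bar y$. The constant $C$ in the weight is chosen large enough, independently of $\theta,\theta'$. *)

theory Defs
  imports "HOL-Analysis.Analysis"
begin

definition red2pi :: "real \<Rightarrow> real" where
  "red2pi x = x - 2 * pi * of_int \<lfloor>(x + pi) / (2 * pi)\<rfloor>"

definition Wm1 :: "real \<Rightarrow> real" where
  "Wm1 x = (let z = red2pi x in
     if \<bar>z\<bar> \<le> 2 * pi / 3 then \<bar>sin z\<bar> * (sin (z / 2))^2 else 3 * sqrt 3 / 8)"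

definition Wtilde :: "real \<Rightarrow> real \<Rightarrow> real \<Rightarrow> real" where
  "Wtilde C \<theta> x = exp (C * \<bar>red2pi x\<bar> / \<theta>)"

definition Wt :: "real \<Rightarrow> real \<Rightarrow> real \<Rightarrow> real" where
  "Wt C \<theta> x = Wm1 x * Wtilde C \<theta> x"

definition oint :: "real \<Rightarrow> real \<Rightarrow> (real \<Rightarrow> real) \<Rightarrow> real" where
  "oint a b f = (if a \<le> b then integral {a..b} f else - integral {b..a} f)"

definition charac :: "(real \<Rightarrow> real \<Rightarrow> real) \<Rightarrow> real \<Rightarrow> real \<Rightarrow> (real \<Rightarrow> real) \<Rightarrow> bool" where
  "charac \<eta> s0 s1 Y \<longleftrightarrow>
     (\<forall>s\<in>{s0..s1}. (Y has_real_derivative (sin (Y s) + oint 0 (Y s) (\<eta> s))) (at s within {s0..s1}))"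

text \<open>Omega*(s): image of Omega*_{s0} under the characteristic flow.\<close>
definition Omega_star :: "(real \<Rightarrow> real \<Rightarrow> real) \<Rightarrow> real \<Rightarrow> real \<Rightarrow> real set \<Rightarrow> real \<Rightarrow> real set" where
  "Omega_star \<eta> s0 s1 \<Omega>0 s = {Y s | Y. charac \<eta> s0 s1 Y \<and> Y s0 \<in> \<Omega>0}"

text \<open>u is the solution Sbar(s,s0)u0 of the transport equation on the flowed domain, expressed along
  characteristics: d/ds u(s,Y(s)) = 2 cos(Y(s)) u(s,Y(s)), u(s0,.) = u0.\<close>
definition is_Sbar_solution ::
  "(real \<Rightarrow> real \<Rightarrow> real) \<Rightarrow> real \<Rightarrow> real \<Rightarrow> real set \<Rightarrow> (real \<Rightarrow> real) \<Rightarrow> (real \<Rightarrow> real \<Rightarrow> real) \<Rightarrow> bool" where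
  "is_Sbar_solution \<eta> s0 s1 \<Omega>0 u0 u \<longleftrightarrow>
     (\<forall>Y. charac \<eta> s0 s1 Y \<and> Y s0 \<in> \<Omega>0 \<longrightarrow>
        u s0 (Y s0) = u0 (Y s0) \<and>
        (\<forall>s\<in>{s0..s1}. ((\<lambda>\<tau>. u \<tau> (Y \<tau>)) has_real_derivative (2 * cos (Y s) * u s (Y s)))
                          (at s within {s0..s1})))"

end

theory Submission
  imports Defs
begin

lemma mono_within:
  fixes f f' :: "real \<Rightarrow> real"
  assumes "a \<le> x" "x \<le> y" "y \<le> b"
    and der: "\<And>t. t \<in> {a..b} \<Longrightarrow> (f has_real_derivative f' t) (at t within {a..b})"
    and nn: "\<And>t. t \<in> {a..b} \<Longrightarrow> f' t \<ge> 0"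
  shows "f x \<le> f y"
proof -
  have "\<exists>z\<in>{x..y}. f y - f x = (\<lambda>h. h * f' z) (y - x)"
  proof (rule mvt_very_simple)
    show "x \<le> y" by fact
    fix t assume "x \<le> t" "t \<le> y"
    then have "(f has_real_derivative f' t) (at t within {a..b})" using der assms by auto
    then have "(f has_real_derivative f' t) (at t within {x..y})"
      by (rule has_field_derivative_subset) (use assms in auto)
    moreover have eq: "(\<lambda>h. h * f' t) = (*) (f' t)" by (auto simp: fun_eq_iff)
    ultimately show "(f has_derivative (\<lambda>h. h * f' t)) (at t within {x..y})"
      by (simp add: has_field_derivative_def)
  qed
  then obtain z where z: "z \<in> {x..y}" "f y - f x = (y - x) * f' z" by auto
  have "f' z \<ge> 0" using nn z assms by auto
  with z assms show ?thesis by (smt (verit) mult_nonneg_nonneg)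
qed

lemma first_crossing:
  fixes f :: "real \<Rightarrow> real"
  assumes "a \<le> b" "continuous_on {a..b} f" "f a \<le> c"
    and loc: "\<And>t. t \<in> {a..<b} \<Longrightarrow> f t = c \<Longrightarrow> eventually (\<lambda>\<tau>. f \<tau> \<le> c) (at t within {t<..b})"
  shows "\<forall>t\<in>{a..b}. f t \<le> c"
proof (rule ccontr)
  assume "\<not> ?thesis"
  then obtain y where y: "y \<in> {a..b}" "f y > c" by force
  define S where "S = {\<tau>\<in>{a..y}. f \<tau> \<le> c}"
  have aS: "a \<in> S" using assms y by (auto simp: S_def)
  have bdd: "bdd_above S" by (auto simp: S_def bdd_above_def)
  define t1 where "t1 = Sup S"
  have t1ge: "a \<le> t1" using aS bdd by (simp add: t1_def cSup_upper)
  have t1le: "t1 \<le> y" unfolding t1_def by (rule cSup_least) (use aS in \<open>auto simp: S_def\<close>)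
  have contY: "continuous_on {a..y} f" using assms(2) by (rule continuous_on_subset) (use y in auto)
  have clS: "closed S"
  proof -
    have "closed ({a..y} \<inter> f -` {..c})"
      by (rule continuous_closed_preimage[OF contY]) auto
    moreover have "S = {a..y} \<inter> f -` {..c}" by (auto simp: S_def)
    ultimately show ?thesis by simp
  qed
  have t1S: "t1 \<in> S" unfolding t1_def using clS aS bdd by (intro closed_contains_Sup) auto
  then have ft1: "f t1 \<le> c" by (simp add: S_def)
  have t1y: "t1 < y" using t1le ft1 y by (cases "t1 = y") auto
  have above: "\<And>\<tau>. \<tau> \<in> {t1<..y} \<Longrightarrow> f \<tau> > c"
  proof -
    fix \<tau> assume "\<tau> \<in> {t1<..y}"
    then have "\<tau> \<notin> S" using bdd by (auto simp: t1_def dest: cSup_upper)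
    then show "f \<tau> > c" using \<open>\<tau> \<in> {t1<..y}\<close> t1ge by (auto simp: S_def)
  qed
  have "f t1 = c"
  proof (rule ccontr)
    assume "f t1 \<noteq> c"
    then have lt: "f t1 < c" using ft1 by auto
    have "continuous (at t1 within {a..y}) f" using contY t1ge t1le
      by (simp add: continuous_on_eq_continuous_within)
    then have "eventually (\<lambda>\<tau>. f \<tau> < c) (at t1 within {a..y})"
      using lt by (auto simp: continuous_within dest: order_tendstoD)
    then obtain d where d: "d > 0" "\<And>\<tau>. \<tau> \<in> {a..y} \<Longrightarrow> \<tau> \<noteq> t1 \<Longrightarrow> dist \<tau> t1 < d \<Longrightarrow> f \<tau> < c"
      by (auto simp: eventually_at)
    define \<tau> where "\<tau> = min y (t1 + d/2)"
    have "\<tau> \<in> {t1<..y}" using t1y d by (auto simp: \<tau>_def)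
    moreover have "f \<tau> < c" using d(2)[of \<tau>] t1y d t1ge by (auto simp: \<tau>_def dist_real_def)
    ultimately show False using above by force
  qed
  then have "eventually (\<lambda>\<tau>. f \<tau> \<le> c) (at t1 within {t1<..b})"
    using loc[of t1] t1ge t1y y by auto
  then obtain d where d: "d > 0" "\<And>\<tau>. \<tau> \<in> {t1<..b} \<Longrightarrow> \<tau> \<noteq> t1 \<Longrightarrow> dist \<tau> t1 < d \<Longrightarrow> f \<tau> \<le> c"
    by (auto simp: eventually_at)
  define \<tau> where "\<tau> = min y (t1 + d/2)"
  have "\<tau> \<in> {t1<..y}" using t1y d by (auto simp: \<tau>_def)
  moreover have "f \<tau> \<le> c" using d(2)[of \<tau>] t1y d y by (auto simp: \<tau>_def dist_real_def)
  ultimately show False using above by force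
qed

lemma right_local_mono:
  fixes g :: "real \<Rightarrow> real"
  assumes "continuous_on {a..b} g"
    and loc: "\<And>t. t \<in> {a..<b} \<Longrightarrow> eventually (\<lambda>\<tau>. g \<tau> \<ge> g t) (at t within {t<..b})"
    and "a \<le> x" "x \<le> y" "y \<le> b"
  shows "g x \<le> g y"
proof -
  have "\<forall>t\<in>{x..b}. - g t \<le> - g x"
  proof (rule first_crossing)
    show "continuous_on {x..b} (\<lambda>t. - g t)"
      by (intro continuous_intros continuous_on_subset[OF assms(1)]) (use assms in auto)
    fix t assume t: "t \<in> {x..<b}" "- g t = - g x"
    have "eventually (\<lambda>\<tau>. g \<tau> \<ge> g t) (at t within {t<..b})" using loc[of t] t(1) assms by auto
    then show "eventually (\<lambda>\<tau>. - g \<tau> \<le> - g x) (at t within {t<..b})"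
      by (rule eventually_mono) (use t in auto)
  qed (use assms in auto)
  then show ?thesis using assms by auto
qed


lemma exp_shift:
  fixes A B x :: real
  assumes "A * exp (- x) \<le> B" shows "A \<le> B * exp x"
  using assms by (simp add: exp_minus divide_inverse[symmetric] pos_divide_le_eq)

lemma gronwall:
  fixes D D' :: "real \<Rightarrow> real"
  assumes ab: "a \<le> b" and t0: "t0 \<in> {a..b}" and L: "L \<ge> 0"
    and der: "\<And>t. t \<in> {a..b} \<Longrightarrow> (D has_real_derivative D' t) (at t within {a..b})"
    and bd: "\<And>t. t \<in> {a..b} \<Longrightarrow> \<bar>D' t\<bar> \<le> L * \<bar>D t\<bar>"
    and t: "t \<in> {a..b}"
  shows "\<bar>D t\<bar> \<le> exp (L * \<bar>t - t0\<bar>) * \<bar>D t0\<bar>"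
proof -
  have key: "D \<tau> * D' \<tau> \<le> L * (D \<tau>)^2" "- (D \<tau> * D' \<tau>) \<le> L * (D \<tau>)^2" if "\<tau> \<in> {a..b}" for \<tau>
  proof -
    have "\<bar>D \<tau> * D' \<tau>\<bar> \<le> \<bar>D \<tau>\<bar> * (L * \<bar>D \<tau>\<bar>)"
      unfolding abs_mult by (rule mult_left_mono) (use bd that in auto)
    also have "\<dots> = L * (D \<tau>)^2" by (simp add: power2_eq_square abs_mult_self)
    finally show "D \<tau> * D' \<tau> \<le> L * (D \<tau>)^2" "- (D \<tau> * D' \<tau>) \<le> L * (D \<tau>)^2" by auto
  qed
  have sq: "(D t)^2 \<le> exp (2 * L * \<bar>t - t0\<bar>) * (D t0)^2"
  proof (cases "t0 \<le> t")
    case True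
    define \<phi> where "\<phi> \<tau> = - ((D \<tau>)^2 * exp (- 2 * L * (\<tau> - t0)))" for \<tau>
    have "\<phi> t0 \<le> \<phi> t"
    proof (rule mono_within[where a=a and b=b and f=\<phi> and f'="\<lambda>\<tau>. - (2 * D \<tau> * D' \<tau> * exp (- 2 * L * (\<tau> - t0))
          - 2 * L * (D \<tau>)^2 * exp (- 2 * L * (\<tau> - t0)))"])
      fix \<tau> assume \<tau>: "\<tau> \<in> {a..b}"
      show "(\<phi> has_real_derivative - (2 * D \<tau> * D' \<tau> * exp (- 2 * L * (\<tau> - t0))
          - 2 * L * (D \<tau>)^2 * exp (- 2 * L * (\<tau> - t0)))) (at \<tau> within {a..b})"
        unfolding \<phi>_def
        apply (rule derivative_eq_intros der[OF \<tau>] refl | simp)+ done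
      have "2 * D \<tau> * D' \<tau> * exp (- 2 * L * (\<tau> - t0)) \<le> 2 * L * (D \<tau>)^2 * exp (- 2 * L * (\<tau> - t0))"
        using key(1)[OF \<tau>] by (intro mult_right_mono) auto
      then show "0 \<le> - (2 * D \<tau> * D' \<tau> * exp (- 2 * L * (\<tau> - t0))
          - 2 * L * (D \<tau>)^2 * exp (- 2 * L * (\<tau> - t0)))" by simp
    qed (use True t0 t in auto)
    then have "(D t)^2 * exp (- 2 * L * (t - t0)) \<le> (D t0)^2" by (simp add: \<phi>_def)
    then have "(D t)^2 * exp (- (2 * L * (t - t0))) \<le> (D t0)^2" by simp
    then have "(D t)^2 \<le> (D t0)^2 * exp (2 * L * (t - t0))" by (rule exp_shift)
    then show ?thesis using True by (simp add: mult.commute)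
  next
    case False
    define \<phi> where "\<phi> \<tau> = ((D \<tau>)^2 * exp (2 * L * (\<tau> - t0)))" for \<tau>
    have "\<phi> t \<le> \<phi> t0"
    proof (rule mono_within[where a=a and b=b and f=\<phi> and f'="\<lambda>\<tau>. (2 * D \<tau> * D' \<tau> * exp (2 * L * (\<tau> - t0))
          + 2 * L * (D \<tau>)^2 * exp (2 * L * (\<tau> - t0)))"])
      fix \<tau> assume \<tau>: "\<tau> \<in> {a..b}"
      show "(\<phi> has_real_derivative (2 * D \<tau> * D' \<tau> * exp (2 * L * (\<tau> - t0))
          + 2 * L * (D \<tau>)^2 * exp (2 * L * (\<tau> - t0)))) (at \<tau> within {a..b})"
        unfolding \<phi>_def
        apply (rule derivative_eq_intros der[OF \<tau>] refl | simp)+ done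
      have "- (2 * D \<tau> * D' \<tau>) * exp (2 * L * (\<tau> - t0)) \<le> 2 * L * (D \<tau>)^2 * exp (2 * L * (\<tau> - t0))"
        using key(2)[OF \<tau>] by (intro mult_right_mono) auto
      then show "0 \<le> (2 * D \<tau> * D' \<tau> * exp (2 * L * (\<tau> - t0))
          + 2 * L * (D \<tau>)^2 * exp (2 * L * (\<tau> - t0)))" by simp
    qed (use False t0 t in auto)
    then have "(D t)^2 * exp (2 * L * (t - t0)) \<le> (D t0)^2" by (simp add: \<phi>_def)
    then have "(D t)^2 * exp (- (2 * L * (t0 - t))) \<le> (D t0)^2" by (simp add: algebra_simps)
    then have "(D t)^2 \<le> (D t0)^2 * exp (2 * L * (t0 - t))" by (rule exp_shift)
    then show ?thesis using False by (simp add: mult.commute)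
  qed
  have "(exp (L * \<bar>t - t0\<bar>) * \<bar>D t0\<bar>)^2 = exp (2 * L * \<bar>t - t0\<bar>) * (D t0)^2"
    by (simp add: power_mult_distrib exp_double[symmetric] mult.assoc)
  with sq have "\<bar>D t\<bar>^2 \<le> (exp (L * \<bar>t - t0\<bar>) * \<bar>D t0\<bar>)^2" by simp
  then show ?thesis by (rule power2_le_imp_le) simp
qed

lemma oint_base:
  fixes f :: "real \<Rightarrow> real"
  assumes f: "continuous_on UNIV f" and "c \<le> a" "c \<le> b"
  shows "oint a b f = integral {c..b} f - integral {c..a} f"
proof (cases "a \<le> b")
  case True
  have "integral {c..a} f + integral {a..b} f = integral {c..b} f"
    by (rule Henstock_Kurzweil_Integration.integral_combine) (use assms True in \<open>auto intro!: integrable_continuous_real continuous_on_subset[OF f]\<close>)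
  then show ?thesis using True by (simp add: oint_def)
next
  case False
  have "integral {c..b} f + integral {b..a} f = integral {c..a} f"
    by (rule Henstock_Kurzweil_Integration.integral_combine) (use assms False in \<open>auto intro!: integrable_continuous_real continuous_on_subset[OF f]\<close>)
  then show ?thesis using False by (simp add: oint_def)
qed

lemma oint_add:
  fixes f :: "real \<Rightarrow> real"
  assumes f: "continuous_on UNIV f"
  shows "oint a b f + oint b d f = oint a d f"
proof -
  define c where "c = min a (min b d)"
  show ?thesis using oint_base[OF f, of c] by (simp add: c_def)
qed

lemma oint_bound:
  fixes f :: "real \<Rightarrow> real"
  assumes f: "continuous_on UNIV f"
    and bd: "\<And>y. min a b \<le> y \<Longrightarrow> y \<le> max a b \<Longrightarrow> \<bar>f y\<bar> \<le> B"
  shows "\<bar>oint a b f\<bar> \<le> B * \<bar>b - a\<bar>"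
proof (cases "a \<le> b")
  case True
  have "norm (integral {a..b} f) \<le> B * (b - a)"
    by (rule integral_bound) (use True bd in \<open>auto intro: continuous_on_subset[OF f]\<close>)
  then show ?thesis using True by (simp add: oint_def)
next
  case False
  have "norm (integral {b..a} f) \<le> B * (a - b)"
    by (rule integral_bound) (use False bd in \<open>auto intro: continuous_on_subset[OF f]\<close>)
  then show ?thesis using False by (simp add: oint_def)
qed

lemma oint_diff:
  fixes f g :: "real \<Rightarrow> real"
  assumes f: "continuous_on UNIV f" and g: "continuous_on UNIV g"
  shows "oint a b f - oint a b g = oint a b (\<lambda>y. f y - g y)"
proof -
  have "f integrable_on {x..y}" "g integrable_on {x..y}" for x y
    by (auto intro!: integrable_continuous_real continuous_on_subset[OF f] continuous_on_subset[OF g])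
  then show ?thesis by (simp add: oint_def integral_diff)
qed

lemma AE_interval_false:
  fixes c d :: real
  assumes "c < d" "AE y in lborel. y \<notin> {c..d}"
  shows False
proof -
  have "(AE y in lborel. y \<notin> {c..d}) \<longleftrightarrow> emeasure lborel {c..d} = 0"
    by (rule AE_iff_measurable) auto
  with assms show False by simp
qed

lemma AE_cont_bound:
  fixes f :: "real \<Rightarrow> real"
  assumes ab: "a < b" and f: "continuous_on {a..b} f"
    and ae: "AE y in lborel. y \<in> {a..b} \<longrightarrow> \<bar>f y\<bar> \<le> B"
    and y1: "y1 \<in> {a..b}"
  shows "\<bar>f y1\<bar> \<le> B"
proof (rule ccontr)
  assume "\<not> ?thesis"
  then have gt: "\<bar>f y1\<bar> > B" by simp
  have "continuous (at y1 within {a..b}) f" using f y1 by (simp add: continuous_on_eq_continuous_within)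
  then have "continuous (at y1 within {a..b}) (\<lambda>y. \<bar>f y\<bar>)" by (intro continuous_intros)
  then have "eventually (\<lambda>y. \<bar>f y\<bar> > B) (at y1 within {a..b})"
    using gt by (auto simp: continuous_within dest: order_tendstoD)
  then obtain e where e: "e > 0" "\<And>y. y \<in> {a..b} \<Longrightarrow> y \<noteq> y1 \<Longrightarrow> dist y y1 < e \<Longrightarrow> \<bar>f y\<bar> > B"
    by (auto simp: eventually_at)
  have e2: "\<And>y. y \<in> {a..b} \<Longrightarrow> dist y y1 < e \<Longrightarrow> \<bar>f y\<bar> > B" using e gt by (metis)
  define c where "c = max a (y1 - e/2)"
  define d where "d = min b (y1 + e/2)"
  have cd: "c < d" using ab e y1 by (auto simp: c_def d_def)
  have "AE y in lborel. y \<notin> {c..d}"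
    using ae
  proof eventually_elim
    case (elim y)
    show ?case
    proof
      assume y: "y \<in> {c..d}"
      then have "y \<in> {a..b}" "dist y y1 < e" using e by (auto simp: c_def d_def dist_real_def)
      then show False using e2 elim by force
    qed
  qed
  then show False using AE_interval_false cd by blast
qed


lemma exp_integral_fwd:
  fixes L d t0 t :: real
  assumes "t0 \<le> t" "L > 0"
  shows "((\<lambda>r. L * d * exp (2 * L * (r - t0))) has_integral (d/2 * exp (2 * L * (t - t0)) - d/2)) {t0..t}"
proof -
  have "((\<lambda>r. L * d * exp (2 * L * (r - t0))) has_integral
      ((\<lambda>r. d/2 * exp (2 * L * (r - t0))) t - (\<lambda>r. d/2 * exp (2 * L * (r - t0))) t0)) {t0..t}"
  proof (rule fundamental_theorem_of_calculus)
    fix x assume "x \<in> {t0..t}"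
    show "((\<lambda>r. d/2 * exp (2 * L * (r - t0))) has_vector_derivative L * d * exp (2 * L * (x - t0))) (at x within {t0..t})"
      unfolding has_real_derivative_iff_has_vector_derivative[symmetric]
      by (rule derivative_eq_intros refl | simp)+
  qed (use assms in auto)
  then show ?thesis by simp
qed

lemma exp_integral_bwd:
  fixes L d t0 t :: real
  assumes "t \<le> t0" "L > 0"
  shows "((\<lambda>r. L * d * exp (2 * L * (t0 - r))) has_integral (d/2 * exp (2 * L * (t0 - t)) - d/2)) {t..t0}"
proof -
  have "((\<lambda>r. L * d * exp (2 * L * (t0 - r))) has_integral
      ((\<lambda>r. - d/2 * exp (2 * L * (t0 - r))) t0 - (\<lambda>r. - d/2 * exp (2 * L * (t0 - r))) t)) {t..t0}"
  proof (rule fundamental_theorem_of_calculus)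
    fix x assume "x \<in> {t..t0}"
    show "((\<lambda>r. - d/2 * exp (2 * L * (t0 - r))) has_vector_derivative L * d * exp (2 * L * (t0 - x))) (at x within {t..t0})"
      unfolding has_real_derivative_iff_has_vector_derivative[symmetric]
      by (rule derivative_eq_intros refl | simp)+
  qed (use assms in auto)
  then show ?thesis by simp
qed

lemma picard_key:
  fixes G :: "real \<Rightarrow> real \<Rightarrow> real" and \<phi> \<psi> :: "real \<Rightarrow> real"
  assumes ab: "a \<le> b" and t0: "t0 \<in> {a..b}" and L: "L > 0"
    and contG: "\<And>\<phi>. continuous_on {a..b} \<phi> \<Longrightarrow> continuous_on {a..b} (\<lambda>t. G t (\<phi> t))"
    and lipG: "\<And>t x z. t \<in> {a..b} \<Longrightarrow> \<bar>G t x - G t z\<bar> \<le> L * \<bar>x - z\<bar>"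
    and c1: "continuous_on {a..b} \<phi>" and c2: "continuous_on {a..b} \<psi>"
    and bd: "\<And>t. t \<in> {a..b} \<Longrightarrow> \<bar>\<phi> t - \<psi> t\<bar> \<le> d * exp (2 * L * \<bar>t - t0\<bar>)"
    and t: "t \<in> {a..b}"
  shows "\<bar>(integral {a..t} (\<lambda>r. G r (\<phi> r)) - integral {a..t0} (\<lambda>r. G r (\<phi> r)))
         - (integral {a..t} (\<lambda>r. G r (\<psi> r)) - integral {a..t0} (\<lambda>r. G r (\<psi> r)))\<bar>
         \<le> d/2 * exp (2 * L * \<bar>t - t0\<bar>)"
proof -
  define h where "h r = G r (\<phi> r) - G r (\<psi> r)" for r
  have ch: "continuous_on {a..b} h" unfolding h_def by (intro continuous_intros contG c1 c2)
  have int: "\<And>x y. a \<le> x \<Longrightarrow> y \<le> b \<Longrightarrow> f integrable_on {x..y}" if "continuous_on {a..b} f" for f :: "real \<Rightarrow> real"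
    by (rule integrable_continuous_real) (auto intro: continuous_on_subset[OF that])
  have i1: "(\<lambda>r. G r (\<phi> r)) integrable_on {a..x}" "(\<lambda>r. G r (\<psi> r)) integrable_on {a..x}" if "x \<le> b" for x
    using int[OF contG[OF c1]] int[OF contG[OF c2]] that by auto
  have eq: "(integral {a..t} (\<lambda>r. G r (\<phi> r)) - integral {a..t0} (\<lambda>r. G r (\<phi> r)))
         - (integral {a..t} (\<lambda>r. G r (\<psi> r)) - integral {a..t0} (\<lambda>r. G r (\<psi> r)))
         = integral {a..t} h - integral {a..t0} h"
    unfolding h_def using t t0 by (simp add: integral_diff i1)
  have hb: "\<bar>h r\<bar> \<le> L * (d * exp (2 * L * \<bar>r - t0\<bar>))" if "r \<in> {a..b}" for r
  proof -
    have "\<bar>h r\<bar> \<le> L * \<bar>\<phi> r - \<psi> r\<bar>" unfolding h_def using lipG that by auto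
    also have "\<dots> \<le> L * (d * exp (2 * L * \<bar>r - t0\<bar>))" using bd[OF that] L by (intro mult_left_mono) auto
    finally show ?thesis .
  qed
  have d0: "d \<ge> 0"
  proof -
    have "0 \<le> d * exp (2 * L * \<bar>t - t0\<bar>)" using bd[OF t] by linarith
    then show ?thesis by (simp add: zero_le_mult_iff)
  qed
  show ?thesis
  proof (cases "t0 \<le> t")
    case True
    have "integral {a..t0} h + integral {t0..t} h = integral {a..t} h"
      by (rule Henstock_Kurzweil_Integration.integral_combine) (use True t0 t int[OF ch] in auto)
    then have eq2: "integral {a..t} h - integral {a..t0} h = integral {t0..t} h" by simp
    have "norm (integral {t0..t} h) \<le> integral {t0..t} (\<lambda>r. L * d * exp (2 * L * (r - t0)))"
    proof (rule integral_norm_bound_integral)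
      show "h integrable_on {t0..t}" using int[OF ch] t0 t by auto
      show "(\<lambda>r. L * d * exp (2 * L * (r - t0))) integrable_on {t0..t}"
        using exp_integral_fwd[OF True L] by blast
      fix r assume "r \<in> {t0..t}"
      then show "norm (h r) \<le> L * d * exp (2 * L * (r - t0))" using hb[of r] t0 t by auto
    qed
    also have "\<dots> = d/2 * exp (2 * L * (t - t0)) - d/2" using exp_integral_fwd[OF True L] by blast
    finally show ?thesis using eq eq2 True d0 by simp
  next
    case False
    have "integral {a..t} h + integral {t..t0} h = integral {a..t0} h"
      by (rule Henstock_Kurzweil_Integration.integral_combine) (use False t0 t int[OF ch] in auto)
    then have eq2: "integral {a..t} h - integral {a..t0} h = - integral {t..t0} h" by simp
    have "norm (integral {t..t0} h) \<le> integral {t..t0} (\<lambda>r. L * d * exp (2 * L * (t0 - r)))"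
    proof (rule integral_norm_bound_integral)
      show "h integrable_on {t..t0}" using int[OF ch] t0 t by auto
      show "(\<lambda>r. L * d * exp (2 * L * (t0 - r))) integrable_on {t..t0}"
        using exp_integral_bwd[of t t0 L d] False L by auto
      fix r assume "r \<in> {t..t0}"
      then show "norm (h r) \<le> L * d * exp (2 * L * (t0 - r))" using hb[of r] t0 t by auto
    qed
    also have "\<dots> = d/2 * exp (2 * L * (t0 - t)) - d/2" by (rule integral_unique[OF exp_integral_bwd]) (use False L in auto)
    finally show ?thesis using eq eq2 False d0 by simp
  qed
qed


lemma small_pow_bound:
  fixes x c :: real
  assumes "\<And>n::nat. x \<le> c * (1/2)^n" "c \<ge> 0"
  shows "x \<le> 0"
proof (rule ccontr)
  assume "\<not> x \<le> 0"
  then have xp: "x > 0" by simp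
  obtain n where n: "(1/2::real)^n < x / (c+1)" using real_arch_pow_inv[of "x/(c+1)" "1/2"] xp assms by auto
  have "c * (1/2)^n \<le> (c+1) * (1/2::real)^n" by (simp add: mult_right_mono)
  also have "\<dots> < (c+1) * (x / (c+1))" using n assms by (intro mult_strict_left_mono) auto
  also have "\<dots> = x" using assms by simp
  finally show False using assms(1)[of n] by simp
qed

lemma picard:
  fixes G :: "real \<Rightarrow> real \<Rightarrow> real"
  assumes ab: "a \<le> b" and t0: "t0 \<in> {a..b}" and L: "L > 0"
    and contG: "\<And>\<phi>. continuous_on {a..b} \<phi> \<Longrightarrow> continuous_on {a..b} (\<lambda>t. G t (\<phi> t))"
    and lipG: "\<And>t x z. t \<in> {a..b} \<Longrightarrow> \<bar>G t x - G t z\<bar> \<le> L * \<bar>x - z\<bar>"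
  shows "\<exists>Y. Y t0 = y0 \<and> (\<forall>t\<in>{a..b}. (Y has_real_derivative G t (Y t)) (at t within {a..b}))"
proof -
  define T :: "(real \<Rightarrow> real) \<Rightarrow> real \<Rightarrow> real" where
    "T \<phi> t = y0 + (integral {a..t} (\<lambda>r. G r (\<phi> r)) - integral {a..t0} (\<lambda>r. G r (\<phi> r)))" for \<phi> t
  define w where "w t = exp (2 * L * \<bar>t - t0\<bar>)" for t
  define E where "E = exp (2 * L * (b - a))"
  have w1: "w t \<ge> 1" for t using L by (simp add: w_def)
  have wE: "w t \<le> E" if "t \<in> {a..b}" for t
    using that t0 L unfolding w_def E_def by (auto intro!: mult_left_mono)
  have Tcont: "continuous_on {a..b} (T \<phi>)" if "continuous_on {a..b} \<phi>" for \<phi>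
  proof -
    have "continuous_on {a..b} (\<lambda>t. integral {a..t} (\<lambda>r. G r (\<phi> r)))"
      by (rule indefinite_integral_continuous_1) (rule integrable_continuous_real[OF contG[OF that]])
    then show ?thesis unfolding T_def by (intro continuous_intros)
  qed
  have Tkey: "\<bar>T \<phi> t - T \<psi> t\<bar> \<le> d/2 * w t"
    if "continuous_on {a..b} \<phi>" "continuous_on {a..b} \<psi>" "\<And>t. t \<in> {a..b} \<Longrightarrow> \<bar>\<phi> t - \<psi> t\<bar> \<le> d * w t"
       "t \<in> {a..b}" for \<phi> \<psi> d t
    using picard_key[OF ab t0 L contG lipG that(1,2), of d t] that(3,4) unfolding T_def w_def by auto
  define \<phi> where "\<phi> n = (T ^^ n) (\<lambda>_. y0)" for n
  have \<phi>S: "\<phi> (Suc n) = T (\<phi> n)" for n by (simp add: \<phi>_def)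
  have \<phi>c: "continuous_on {a..b} (\<phi> n)" for n
  proof (induction n)
    case 0 show ?case by (simp add: \<phi>_def)
  next
    case (Suc n) then show ?case unfolding \<phi>S by (rule Tcont)
  qed
  obtain K0 where K0: "\<forall>x\<in>(\<lambda>t. \<phi> 1 t - \<phi> 0 t) ` {a..b}. \<bar>x\<bar> \<le> K0"
  proof -
    have "bounded ((\<lambda>t. \<phi> 1 t - \<phi> 0 t) ` {a..b})"
      by (intro compact_imp_bounded compact_continuous_image continuous_intros \<phi>c) auto
    then show ?thesis using that by (auto simp: bounded_real)
  qed
  define K where "K = max K0 0"
  have K: "K \<ge> 0" "\<And>t. t \<in> {a..b} \<Longrightarrow> \<bar>\<phi> 1 t - \<phi> 0 t\<bar> \<le> K" using K0 by (force simp: K_def)+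
  have step: "\<forall>t\<in>{a..b}. \<bar>\<phi> (Suc n) t - \<phi> n t\<bar> \<le> K * (1/2)^n * w t" for n
  proof (induction n)
    case 0
    show ?case
    proof
      fix t assume t: "t \<in> {a..b}"
      have "\<bar>\<phi> 1 t - \<phi> 0 t\<bar> \<le> K" using K t by auto
      also have "\<dots> \<le> K * w t" using mult_left_mono[of 1 "w t" K] w1[of t] K by simp
      finally show "\<bar>\<phi> (Suc 0) t - \<phi> 0 t\<bar> \<le> K * (1/2)^0 * w t" by simp
    qed
  next
    case (Suc n)
    show ?case
    proof
      fix t assume t: "t \<in> {a..b}"
      have "\<bar>T (\<phi> (Suc n)) t - T (\<phi> n) t\<bar> \<le> (K * (1/2)^n)/2 * w t"
        by (rule Tkey[OF \<phi>c \<phi>c _ t]) (use Suc in auto)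
      then show "\<bar>\<phi> (Suc (Suc n)) t - \<phi> (Suc n) t\<bar> \<le> K * (1/2)^(Suc n) * w t"
        by (simp add: \<phi>S)
    qed
  qed
  have step2: "\<bar>\<phi> (Suc n) t - \<phi> n t\<bar> \<le> K * E * (1/2)^n" if "t \<in> {a..b}" for n t
  proof -
    have "\<bar>\<phi> (Suc n) t - \<phi> n t\<bar> \<le> K * (1/2)^n * w t" using step that by auto
    also have "\<dots> \<le> K * (1/2)^n * E" using wE[OF that] K by (intro mult_left_mono) auto
    finally show ?thesis by (simp add: ac_simps)
  qed
  have tele: "\<bar>\<phi> (n + k) t - \<phi> n t\<bar> \<le> 2 * K * E * ((1/2)^n - (1/2)^(n+k))" if "t \<in> {a..b}" for n k t
  proof (induction k)
    case 0 then show ?case by simp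
  next
    case (Suc k)
    have "\<bar>\<phi> (n + Suc k) t - \<phi> n t\<bar> \<le> \<bar>\<phi> (Suc (n + k)) t - \<phi> (n+k) t\<bar> + \<bar>\<phi> (n + k) t - \<phi> n t\<bar>" by simp
    also have "\<dots> \<le> K * E * (1/2)^(n+k) + 2 * K * E * ((1/2)^n - (1/2)^(n+k))"
      using step2[OF that, of "n+k"] Suc by linarith
    also have "\<dots> = 2 * K * E * ((1/2)^n - (1/2)^(n + Suc k))" by (simp add: algebra_simps)
    finally show ?case .
  qed
  have E0: "E \<ge> 0" by (simp add: E_def)
  have KE0: "0 \<le> 2 * K * E" using K E0 by simp
  have cauchy: "\<bar>\<phi> m t - \<phi> n t\<bar> \<le> 2 * K * E * (1/2)^n" if tab: "t \<in> {a..b}" and nm: "n \<le> m" for n m t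
  proof -
    obtain k where mk: "m = n + k" using le_Suc_ex[OF nm] by (elim exE)
    have "\<bar>\<phi> m t - \<phi> n t\<bar> \<le> 2 * K * E * ((1/2)^n - (1/2)^(n+k))" unfolding mk by (rule tele[OF tab])
    also have "\<dots> \<le> 2 * K * E * (1/2)^n"
    proof (rule mult_left_mono)
      show "(1/2::real)^n - (1/2)^(n+k) \<le> (1/2)^n" by simp
      show "0 \<le> 2 * K * E" using K E0 by simp
    qed
    finally show ?thesis .
  qed
  have small: "\<exists>M. \<forall>n\<ge>M. 2 * K * E * (1/2::real)^n < e" if ep: "e > 0" for e
  proof -
    obtain M where M: "(1/2::real)^M < e / (2 * K * E + 1)"
      proof -
      have "0 < e / (2 * K * E + 1)" using ep K E0 by (simp add: add_nonneg_pos)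
      then show ?thesis using real_arch_pow_inv[of "e / (2 * K * E + 1)" "1/2"] that by auto
    qed
    have "2 * K * E * (1/2::real)^n < e" if "n \<ge> M" for n
    proof -
      have "(1/2::real)^n \<le> (1/2)^M" using that by (simp add: power_decreasing)
      have "2 * K * E * (1/2::real)^n \<le> (2 * K * E + 1) * (1/2)^M"
        using \<open>(1/2::real)^n \<le> (1/2)^M\<close> KE0 by (intro mult_mono) auto
      also have "\<dots> < (2 * K * E + 1) * (e / (2 * K * E + 1))" by (rule mult_strict_left_mono[OF M]) (use KE0 in linarith)
      also have "\<dots> = e" proof - have "2 * K * E + 1 \<noteq> 0" using KE0 by linarith then show ?thesis by simp qed
      finally show ?thesis .
    qed
    then show ?thesis by blast
  qed
  have "uniformly_Cauchy_on {a..b} \<phi>"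
    unfolding uniformly_Cauchy_on_def
  proof (intro allI impI)
    fix e :: real assume "e > 0"
    then obtain M where M: "\<forall>n\<ge>M. 2 * K * E * (1/2::real)^n < e" using small by blast
    show "\<exists>M. \<forall>x\<in>{a..b}. \<forall>m\<ge>M. \<forall>n\<ge>M. dist (\<phi> m x) (\<phi> n x) < e"
    proof (intro exI ballI allI impI)
      fix x m n assume x: "x \<in> {a..b}" and mn: "M \<le> m" "M \<le> n"
      show "dist (\<phi> m x) (\<phi> n x) < e"
      proof (cases "n \<le> m")
        case True
        then show ?thesis using cauchy[OF x True] M mn by (auto simp: dist_real_def)
      next
        case False
        then show ?thesis using cauchy[OF x, of m n] M mn by (auto simp: dist_real_def)
      qed
    qed
  qed
  then have "uniformly_convergent_on {a..b} \<phi>" by (rule Cauchy_uniformly_convergent)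
  then have ul: "uniform_limit {a..b} \<phi> (\<lambda>x. lim (\<lambda>n. \<phi> n x)) sequentially"
    by (simp add: uniformly_convergent_uniform_limit_iff)
  define \<psi> where "\<psi> x = lim (\<lambda>n. \<phi> n x)" for x
  have ul': "uniform_limit {a..b} \<phi> \<psi> sequentially" using ul by (simp add: \<psi>_def[abs_def])
  have \<psi>c: "continuous_on {a..b} \<psi>"
    by (rule uniform_limit_theorem[OF _ ul']) (auto simp: \<phi>c)
  have fix\<psi>: "T \<psi> t = \<psi> t" if t: "t \<in> {a..b}" for t
  proof -
    have "\<bar>T \<psi> t - \<psi> t\<bar> \<le> 0"
    proof (rule ccontr)
      assume "\<not> ?thesis"
      then have pos: "\<bar>T \<psi> t - \<psi> t\<bar> > 0" by simp
      define e where "e = \<bar>T \<psi> t - \<psi> t\<bar> / (E + 1)"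
      have e: "e > 0" using pos E0 by (simp add: e_def)
      have "\<forall>\<^sub>F n in sequentially. \<forall>x\<in>{a..b}. dist (\<phi> n x) (\<psi> x) < e"
        using ul' e by (simp add: uniform_limit_iff)
      then obtain M where M: "\<And>n. n \<ge> M \<Longrightarrow> \<forall>x\<in>{a..b}. dist (\<phi> n x) (\<psi> x) < e"
        unfolding eventually_sequentially by blast
      define n where "n = M"
      have n: "\<forall>x\<in>{a..b}. dist (\<phi> n x) (\<psi> x) < e" "\<forall>x\<in>{a..b}. dist (\<phi> (Suc n) x) (\<psi> x) < e"
        using M[of n] M[of "Suc n"] by (auto simp: n_def)
      have "\<bar>T \<psi> t - T (\<phi> n) t\<bar> \<le> e/2 * w t"
      proof (rule Tkey[OF \<psi>c \<phi>c _ t])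
        fix x assume x: "x \<in> {a..b}"
        have "\<bar>\<phi> n x - \<psi> x\<bar> < e" using n(1) x by (auto simp: dist_real_def)
        then have "\<bar>\<psi> x - \<phi> n x\<bar> \<le> e" by linarith
        also have "\<dots> \<le> e * w x" using w1[of x] e by (simp add: mult_le_cancel_left1)
        finally show "\<bar>\<psi> x - \<phi> n x\<bar> \<le> e * w x" .
      qed
      also have "\<dots> \<le> e/2 * E" using wE[OF t] e by (intro mult_left_mono) auto
      finally have 1: "\<bar>T \<psi> t - \<phi> (Suc n) t\<bar> \<le> e/2 * E" by (simp add: \<phi>S)
      have 2: "\<bar>\<phi> (Suc n) t - \<psi> t\<bar> < e" using n(2) t by (auto simp: dist_real_def)
      have "\<bar>T \<psi> t - \<psi> t\<bar> < e/2 * E + e" using 1 2 by linarith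
      also have "\<dots> \<le> e * (E + 1)" using e E0 by (simp add: algebra_simps)
      also have "\<dots> = \<bar>T \<psi> t - \<psi> t\<bar>" using E0 by (simp add: e_def)
      finally show False by simp
    qed
    then show ?thesis by simp
  qed
  show ?thesis
  proof (intro exI conjI ballI)
    show "\<psi> t0 = y0" using fix\<psi>[OF t0] by (simp add: T_def)
    fix t assume t: "t \<in> {a..b}"
    have d1: "((\<lambda>t. integral {a..t} (\<lambda>r. G r (\<psi> r))) has_real_derivative G t (\<psi> t)) (at t within {a..b})"
      by (rule integral_has_real_derivative[OF contG[OF \<psi>c] t])
    have "(T \<psi> has_real_derivative 0 + (G t (\<psi> t) - 0)) (at t within {a..b})"
      unfolding T_def by (intro DERIV_add DERIV_const DERIV_diff d1)
    then have "(T \<psi> has_real_derivative G t (\<psi> t)) (at t within {a..b})" by simp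
    then show "(\<psi> has_real_derivative G t (\<psi> t)) (at t within {a..b})"
      by (rule has_field_derivative_transform_within[where d=1]) (use t fix\<psi> in auto)
  qed
qed


lemma sin_lip: fixes a b :: real shows "\<bar>sin a - sin b\<bar> \<le> \<bar>a - b\<bar>"
proof -
  have "\<bar>sin a - sin b\<bar> = 2 * \<bar>sin ((a - b) / 2)\<bar> * \<bar>cos ((a + b) / 2)\<bar>"
    by (simp add: sin_diff_sin abs_mult)
  also have "\<dots> \<le> 2 * \<bar>(a - b) / 2\<bar> * 1"
    by (intro mult_mono abs_sin_x_le_abs_x) auto
  finally show ?thesis by simp
qed

lemma sin_lower:
  fixes z :: real
  assumes "0 \<le> z" "z \<le> 2 * pi / 3"
  shows "z / 3 \<le> sin z"
proof (cases "z \<le> pi / 3")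
  case True
  have "(\<lambda>z. sin z - z / 3) 0 \<le> (\<lambda>z. sin z - z / 3) z"
  proof (rule mono_within[where a=0 and b="pi/3" and f="\<lambda>z. sin z - z / 3" and f'="\<lambda>z. cos z - 1/3"])
    fix t :: real assume t: "t \<in> {0..pi/3}"
    show "((\<lambda>z. sin z - z / 3) has_real_derivative cos t - 1/3) (at t within {0..pi/3})"
      by (rule derivative_eq_intros refl | simp)+
    have "cos (pi/3) \<le> cos t" using t by (intro cos_monotone_0_pi_le) auto
    then show "0 \<le> cos t - 1/3" by (simp add: cos_60)
  qed (use assms True in auto)
  then show ?thesis by simp
next
  case False
  have "sin z = cos (pi/2 - z)" by (simp add: sin_cos_eq)
  also have "\<dots> = cos \<bar>pi/2 - z\<bar>" by (metis abs_minus_cancel abs_of_nonneg abs_of_nonpos cos_minus linear)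
  also have "\<dots> \<ge> cos (pi/6)" using False assms by (intro cos_monotone_0_pi_le) (auto simp: abs_if)
  finally have "sin z \<ge> sqrt 3 / 2" by (simp add: cos_30)
  moreover have "sqrt 3 \<ge> 1.7"
    by (rule real_le_rsqrt) (simp add: power2_eq_square)
  moreover have "z / 3 \<le> 0.75" using assms pi_approx by simp
  ultimately show ?thesis by simp
qed

lemma ivt_zero:
  fixes h :: "real \<Rightarrow> real"
  assumes c: "continuous_on {a..b} h" and \<tau>: "\<tau> \<in> {a..b}" and t: "t \<in> {a..b}" and s: "h \<tau> * h t \<le> 0"
  shows "\<exists>x\<in>{a..b}. h x = 0"
proof -
  have main: "\<exists>x\<in>{a..b}. h x = 0" if uv: "u \<in> {a..b}" "v \<in> {a..b}" "u \<le> v" "h u * h v \<le> 0" for u v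
  proof -
    have cuv: "continuous_on {u..v} h" using c uv by (auto intro: continuous_on_subset)
    show ?thesis
    proof (cases "h u \<le> 0")
      case True
      then have "0 \<le> h v \<or> h u = 0" using uv(4) by (auto simp: mult_le_0_iff)
      then show ?thesis
      proof
        assume "0 \<le> h v"
        then obtain x where "u \<le> x" "x \<le> v" "h x = 0" using IVT'[of h u 0 v] True cuv uv by auto
        then show ?thesis using uv by auto
      qed (use uv in auto)
    next
      case False
      then have "h v \<le> 0" using uv(4) by (auto simp: mult_le_0_iff)
      then obtain x where "u \<le> x" "x \<le> v" "h x = 0" using IVT2'[of h v 0 u] False cuv uv by auto
      then show ?thesis using uv by auto
    qed
  qed
  show ?thesis
  proof (cases "\<tau> \<le> t")
    case True then show ?thesis using main[OF \<tau> t] s by auto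
  next
    case False then show ?thesis using main[OF t \<tau>] s by (auto simp: mult.commute)
  qed
qed

lemma G_unique:
  fixes G :: "real \<Rightarrow> real \<Rightarrow> real"
  assumes ab: "a \<le> b" and L: "L \<ge> 0"
    and lip: "\<And>t x z. t \<in> {a..b} \<Longrightarrow> \<bar>G t x - G t z\<bar> \<le> L * \<bar>x - z\<bar>"
    and d1: "\<forall>t\<in>{a..b}. (Z1 has_real_derivative G t (Z1 t)) (at t within {a..b})"
    and d2: "\<forall>t\<in>{a..b}. (Z2 has_real_derivative G t (Z2 t)) (at t within {a..b})"
    and \<tau>: "\<tau> \<in> {a..b}" and eq: "Z1 \<tau> = Z2 \<tau>" and t: "t \<in> {a..b}"
  shows "Z1 t = Z2 t"
proof -
  have "\<bar>(\<lambda>t. Z1 t - Z2 t) t\<bar> \<le> exp (L * \<bar>t - \<tau>\<bar>) * \<bar>(\<lambda>t. Z1 t - Z2 t) \<tau>\<bar>"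
  proof (rule gronwall[OF ab \<tau> L _ _ t, where D' = "\<lambda>t. G t (Z1 t) - G t (Z2 t)"])
    fix s assume s: "s \<in> {a..b}"
    show "((\<lambda>t. Z1 t - Z2 t) has_real_derivative G s (Z1 s) - G s (Z2 s)) (at s within {a..b})"
      using d1 d2 s by (intro DERIV_diff) auto
    show "\<bar>G s (Z1 s) - G s (Z2 s)\<bar> \<le> L * \<bar>Z1 s - Z2 s\<bar>" using lip s by auto
  qed
  then show ?thesis using eq by simp
qed

lemma deriv_eventually_pos:
  fixes f :: "real \<Rightarrow> real"
  assumes "(f has_real_derivative l) (at t within {a..b})" "l > 0" "t \<in> {a..b}"
  shows "eventually (\<lambda>\<tau>. f \<tau> > f t) (at t within {t<..b})"
proof -
  obtain d where d: "d > 0" "\<And>h. h > 0 \<Longrightarrow> t + h \<in> {a..b} \<Longrightarrow> h < d \<Longrightarrow> f t < f (t + h)"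
    using has_real_derivative_pos_inc_right[OF assms(1,2)] by blast
  show ?thesis unfolding eventually_at
  proof (intro exI[of _ d] conjI ballI impI)
    fix x assume x: "x \<in> {t<..b}" "x \<noteq> t \<and> dist x t < d"
    have "f t < f (t + (x - t))" by (rule d(2)) (use x assms(3) in \<open>auto simp: dist_real_def\<close>)
    then show "f x > f t" by simp
  qed (use d in auto)
qed

lemma deriv_eventually_neg:
  fixes f :: "real \<Rightarrow> real"
  assumes "(f has_real_derivative l) (at t within {a..b})" "l < 0" "t \<in> {a..b}"
  shows "eventually (\<lambda>\<tau>. f \<tau> < f t) (at t within {t<..b})"
proof -
  have "((\<lambda>x. - f x) has_real_derivative - l) (at t within {a..b})" using assms(1) by (rule DERIV_minus)
  from deriv_eventually_pos[OF this _ assms(3)] assms(2) show ?thesis by simp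
qed

locale setting =
  fixes \<eta> :: "real \<Rightarrow> real \<Rightarrow> real" and s0 s1 x0 \<delta> :: real
  assumes s01: "s0 \<le> s1"
    and cont: "continuous_on ({s0..s1} \<times> UNIV) (\<lambda>(s, y). \<eta> s y)"
    and x0: "\<bar>x0\<bar> \<le> \<delta>" and dpos: "0 < \<delta>" and dsmall: "\<delta> \<le> 1/100"
    and etabd: "\<forall>s\<in>{s0..s1}. AE y in lborel.
              y \<in> Omega_star \<eta> s0 s1 {- pi - x0 .. pi - x0} s \<longrightarrow> \<bar>\<eta> s y\<bar> \<le> \<delta>"
begin

definition full :: "(real \<Rightarrow> real) \<Rightarrow> bool" where
  "full Y \<longleftrightarrow> charac \<eta> s0 s1 Y \<and> Y s0 \<in> {- pi - x0 .. pi - x0}"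

lemma zero_in: "0 \<in> {- pi - x0 .. pi - x0}" using x0 dsmall pi_gt3 by auto

lemma eta_cont: assumes t: "t \<in> {s0..s1}" shows "continuous_on UNIV (\<eta> t)"
proof -
  have "continuous_on UNIV ((\<lambda>(s, y). \<eta> s y) \<circ> (\<lambda>y. (t, y)))"
    by (rule continuous_on_compose) (use t in \<open>auto intro!: continuous_intros continuous_on_subset[OF cont]\<close>)
  then show ?thesis by (simp add: o_def)
qed

lemma eta_bounded: "\<exists>K\<ge>0. \<forall>t\<in>{s0..s1}. \<forall>y. \<bar>y\<bar> \<le> R \<longrightarrow> \<bar>\<eta> t y\<bar> \<le> K"
proof -
  have "compact ((\<lambda>(s, y). \<eta> s y) ` ({s0..s1} \<times> {-R..R}))"
    by (rule compact_continuous_image[OF continuous_on_subset[OF cont]]) (auto intro: compact_Times)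
  then have "bounded ((\<lambda>(s, y). \<eta> s y) ` ({s0..s1} \<times> {-R..R}))" by (rule compact_imp_bounded)
  then obtain K where K: "\<forall>x\<in>(\<lambda>(s, y). \<eta> s y) ` ({s0..s1} \<times> {-R..R}). \<bar>x\<bar> \<le> K"
    unfolding bounded_real by blast
  show ?thesis
  proof (intro exI[of _ "max K 0"] conjI ballI allI impI)
    fix t y assume "t \<in> {s0..s1}" "\<bar>y\<bar> \<le> R"
    then have "\<bar>\<eta> t y\<bar> \<le> K" using K by force
    then show "\<bar>\<eta> t y\<bar> \<le> max K 0" by simp
  qed simp
qed

lemma charac_cont: "charac \<eta> s0 s1 Y \<Longrightarrow> continuous_on {s0..s1} Y"
  unfolding charac_def continuous_on_eq_continuous_within using DERIV_continuous by blast

lemma charac_der: "charac \<eta> s0 s1 Y \<Longrightarrow> t \<in> {s0..s1} \<Longrightarrow>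
   (Y has_real_derivative (sin (Y t) + oint 0 (Y t) (\<eta> t))) (at t within {s0..s1})"
  by (simp add: charac_def)

lemma contF:
  assumes c: "continuous_on {s0..s1} c" and R: "\<And>t. t \<in> {s0..s1} \<Longrightarrow> \<bar>c t\<bar> \<le> R"
  shows "continuous_on {s0..s1} (\<lambda>t. oint 0 (c t) (\<eta> t))"
proof -
  have R0: "R \<ge> 0" using R[of s0] s01 by auto
  obtain K where K: "K \<ge> 0" "\<forall>t\<in>{s0..s1}. \<forall>y. \<bar>y\<bar> \<le> R \<longrightarrow> \<bar>\<eta> t y\<bar> \<le> K" using eta_bounded by blast
  have uc: "uniformly_continuous_on ({s0..s1} \<times> {-R..R}) (\<lambda>(s, y). \<eta> s y)"
    by (rule compact_uniformly_continuous[OF continuous_on_subset[OF cont]]) (auto intro: compact_Times)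
  show ?thesis
    unfolding continuous_on_iff
  proof (intro ballI allI impI)
    fix t e assume t: "t \<in> {s0..s1}" and e: "(0::real) < e"
    define e1 where "e1 = e / (2 * (R + 1))"
    have e1: "e1 > 0" using e R0 by (simp add: e1_def)
    obtain d1 where d1: "d1 > 0" "\<forall>x\<in>({s0..s1} \<times> {-R..R}). \<forall>x'\<in>({s0..s1} \<times> {-R..R}).
        dist x' x < d1 \<longrightarrow> dist ((\<lambda>(s, y). \<eta> s y) x') ((\<lambda>(s, y). \<eta> s y) x) < e1"
      using uc e1 unfolding uniformly_continuous_on_def by blast
    define e2 where "e2 = e / (2 * (K + 1))"
    have e2: "e2 > 0" using e K by (simp add: e2_def)
    obtain d2 where d2: "d2 > 0" "\<forall>t'\<in>{s0..s1}. dist t' t < d2 \<longrightarrow> dist (c t') (c t) < e2"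
      using c t e2 unfolding continuous_on_iff by blast
    show "\<exists>d>0. \<forall>t'\<in>{s0..s1}. dist t' t < d \<longrightarrow> dist (oint 0 (c t') (\<eta> t')) (oint 0 (c t) (\<eta> t)) < e"
    proof (intro exI[of _ "min d1 d2"] conjI ballI impI)
      show "min d1 d2 > 0" using d1 d2 by simp
      fix t' assume t': "t' \<in> {s0..s1}" "dist t' t < min d1 d2"
      have split: "oint 0 (c t') (\<eta> t') - oint 0 (c t) (\<eta> t)
          = oint 0 (c t') (\<lambda>y. \<eta> t' y - \<eta> t y) + oint (c t) (c t') (\<eta> t)"
        using oint_diff[OF eta_cont[OF t'(1)] eta_cont[OF t], of 0 "c t'"]
          oint_add[OF eta_cont[OF t], of 0 "c t" "c t'"] by linarith
      have b1: "\<bar>oint 0 (c t') (\<lambda>y. \<eta> t' y - \<eta> t y)\<bar> \<le> e1 * \<bar>c t' - 0\<bar>"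
      proof (rule oint_bound)
        show "continuous_on UNIV (\<lambda>y. \<eta> t' y - \<eta> t y)"
          by (intro continuous_intros eta_cont t t'(1))
        fix y assume y: "min 0 (c t') \<le> y" "y \<le> max 0 (c t')"
        have yR: "\<bar>y\<bar> \<le> R" using y R[OF t'(1)] by auto
        have "dist (t', y) (t, y) < d1" using t'(2) by (simp add: dist_Pair_Pair)
        then have "dist (\<eta> t' y) (\<eta> t y) < e1" using d1(2) t t'(1) yR by fastforce
        then show "\<bar>\<eta> t' y - \<eta> t y\<bar> \<le> e1" by (simp add: dist_real_def)
      qed
      have b2: "\<bar>oint (c t) (c t') (\<eta> t)\<bar> \<le> K * \<bar>c t' - c t\<bar>"
      proof (rule oint_bound[OF eta_cont[OF t]])
        fix y assume y: "min (c t) (c t') \<le> y" "y \<le> max (c t) (c t')"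
        have yR: "\<bar>y\<bar> \<le> R" using y R[OF t'(1)] R[OF t] by auto
        then show "\<bar>\<eta> t y\<bar> \<le> K" using K t by auto
      qed
      have "e1 * \<bar>c t' - 0\<bar> \<le> e1 * R" using R[OF t'(1)] e1 by (intro mult_left_mono) auto
      also have "\<dots> < e / 2" using e R0 by (simp add: e1_def field_simps)
      finally have b1': "\<bar>oint 0 (c t') (\<lambda>y. \<eta> t' y - \<eta> t y)\<bar> < e/2" using b1 by linarith
      have "dist (c t') (c t) < e2" using d2 t' by auto
      then have "K * \<bar>c t' - c t\<bar> \<le> K * e2" using K by (intro mult_left_mono) (auto simp: dist_real_def)
      also have "\<dots> < e / 2" using e K by (simp add: e2_def field_simps)
      finally have b2': "\<bar>oint (c t) (c t') (\<eta> t)\<bar> < e/2" using b2 by linarith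
      show "dist (oint 0 (c t') (\<eta> t')) (oint 0 (c t) (\<eta> t)) < e"
        unfolding dist_real_def split using b1' b2' by linarith
    qed
  qed
qed

end

context setting begin

lemma oint_same[simp]: "oint a a f = 0" by (simp add: oint_def)

lemma zero_charac: "charac \<eta> s0 s1 (\<lambda>_. 0)"
  unfolding charac_def by (auto intro: DERIV_const)

lemma interval_in_Omega:
  assumes Y: "full Y" and t: "t \<in> {s0..s1}" and y: "min 0 (Y t) \<le> y" "y \<le> max 0 (Y t)"
  shows "y \<in> Omega_star \<eta> s0 s1 {- pi - x0 .. pi - x0} t"
proof -
  have Yc: "charac \<eta> s0 s1 Y" and Y0: "Y s0 \<in> {- pi - x0 .. pi - x0}" using Y by (auto simp: full_def)
  consider "y = Y t" | "y = 0" | "y \<noteq> Y t" "y \<noteq> 0" by blast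
  then show ?thesis
  proof cases
    case 1 then show ?thesis using Yc Y0 unfolding Omega_star_def by blast
  next
    case 2 then show ?thesis using zero_charac zero_in unfolding Omega_star_def by force
  next
    case 3
    have Ycont: "continuous_on {s0..s1} Y" by (rule charac_cont[OF Yc])
    have "bounded (Y ` {s0..s1})" by (intro compact_imp_bounded compact_continuous_image Ycont) auto
    then obtain R0 where R0: "\<forall>x\<in>Y ` {s0..s1}. \<bar>x\<bar> \<le> R0" unfolding bounded_real by blast
    define R where "R = max R0 0"
    have R: "R \<ge> 0" "\<And>\<tau>. \<tau> \<in> {s0..s1} \<Longrightarrow> \<bar>Y \<tau>\<bar> \<le> R" using R0 by (force simp: R_def)+
    obtain K where K: "K \<ge> 0" "\<forall>t\<in>{s0..s1}. \<forall>y. \<bar>y\<bar> \<le> R \<longrightarrow> \<bar>\<eta> t y\<bar> \<le> K" using eta_bounded by blast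
    define cl where "cl x = max (-R) (min R x)" for x
    have clR: "\<bar>cl x\<bar> \<le> R" for x using R by (auto simp: cl_def)
    have clid: "\<bar>x\<bar> \<le> R \<Longrightarrow> cl x = x" for x by (auto simp: cl_def)
    have cllip: "\<bar>cl x - cl z\<bar> \<le> \<bar>x - z\<bar>" for x z by (auto simp: cl_def)
    define G where "G \<tau> x = sin (cl x) + oint 0 (cl x) (\<eta> \<tau>)" for \<tau> x
    define L where "L = 1 + K"
    have L: "L > 0" using K by (simp add: L_def)
    have lip: "\<bar>G \<tau> x - G \<tau> z\<bar> \<le> L * \<bar>x - z\<bar>" if \<tau>: "\<tau> \<in> {s0..s1}" for \<tau> x z
    proof -
      have "oint 0 (cl z) (\<eta> \<tau>) + oint (cl z) (cl x) (\<eta> \<tau>) = oint 0 (cl x) (\<eta> \<tau>)"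
        by (rule oint_add[OF eta_cont[OF \<tau>]])
      then have eqG: "G \<tau> x - G \<tau> z = (sin (cl x) - sin (cl z)) + oint (cl z) (cl x) (\<eta> \<tau>)"
        unfolding G_def by linarith
      have tri: "\<bar>G \<tau> x - G \<tau> z\<bar> \<le> \<bar>sin (cl x) - sin (cl z)\<bar> + \<bar>oint (cl z) (cl x) (\<eta> \<tau>)\<bar>"
        unfolding eqG by (rule abs_triangle_ineq)
      have Leq: "L * \<bar>x - z\<bar> = \<bar>x - z\<bar> + K * \<bar>x - z\<bar>" by (simp add: L_def algebra_simps)
      have "\<bar>oint (cl z) (cl x) (\<eta> \<tau>)\<bar> \<le> K * \<bar>cl x - cl z\<bar>"
      proof (rule oint_bound[OF eta_cont[OF \<tau>]])
        fix y assume "min (cl z) (cl x) \<le> y" "y \<le> max (cl z) (cl x)"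
        then have "\<bar>y\<bar> \<le> R" using clR[of x] clR[of z] by auto
        then show "\<bar>\<eta> \<tau> y\<bar> \<le> K" using K \<tau> by auto
      qed
      moreover have "\<bar>sin (cl x) - sin (cl z)\<bar> \<le> \<bar>cl x - cl z\<bar>" by (rule sin_lip)
      moreover have "K * \<bar>cl x - cl z\<bar> \<le> K * \<bar>x - z\<bar>" using K cllip by (intro mult_left_mono) auto
      ultimately show ?thesis using cllip[of x z] tri Leq by linarith
    qed
    have contG: "continuous_on {s0..s1} (\<lambda>\<tau>. G \<tau> (\<phi> \<tau>))" if "continuous_on {s0..s1} \<phi>" for \<phi>
    proof -
      have c1: "continuous_on {s0..s1} (\<lambda>\<tau>. cl (\<phi> \<tau>))" unfolding cl_def by (intro continuous_intros that)
      have "continuous_on {s0..s1} (\<lambda>\<tau>. oint 0 (cl (\<phi> \<tau>)) (\<eta> \<tau>))" by (rule contF[OF c1 clR])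
      then show ?thesis unfolding G_def by (intro continuous_intros c1)
    qed
    obtain Z where Zt: "Z t = y" and Zd: "\<forall>\<tau>\<in>{s0..s1}. (Z has_real_derivative G \<tau> (Z \<tau>)) (at \<tau> within {s0..s1})"
      using picard[OF s01 t L contG lip] by blast
    have Zcont: "continuous_on {s0..s1} Z"
      using Zd unfolding continuous_on_eq_continuous_within using DERIV_continuous by blast
    have Yd: "\<forall>\<tau>\<in>{s0..s1}. (Y has_real_derivative G \<tau> (Y \<tau>)) (at \<tau> within {s0..s1})"
      using charac_der[OF Yc] R(2) clid by (simp add: G_def)
    have Od: "\<forall>\<tau>\<in>{s0..s1}. ((\<lambda>_. 0) has_real_derivative G \<tau> ((\<lambda>_. 0) \<tau>)) (at \<tau> within {s0..s1})"
      using R clid[of 0] by (simp add: G_def DERIV_const)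
    have neY: "Z \<tau> \<noteq> Y \<tau>" if "\<tau> \<in> {s0..s1}" for \<tau>
    proof
      assume "Z \<tau> = Y \<tau>"
      then have "Z t = Y t" using G_unique[OF s01 _ lip Zd Yd that _ t] L by auto
      then show False using 3 Zt by simp
    qed
    have ne0: "Z \<tau> \<noteq> 0" if "\<tau> \<in> {s0..s1}" for \<tau>
    proof
      assume "Z \<tau> = 0"
      then have "Z t = (\<lambda>_. 0) t" using G_unique[OF s01 _ lip Zd Od that _ t] L by auto
      then show False using 3 Zt by simp
    qed
    have s1': "(Z \<tau> - Y \<tau>) * (y - Y t) > 0" if \<tau>: "\<tau> \<in> {s0..s1}" for \<tau>
    proof (rule ccontr)
      assume "\<not> ?thesis"
      then have "(\<lambda>x. Z x - Y x) \<tau> * (\<lambda>x. Z x - Y x) t \<le> 0" using Zt by simp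
      moreover have "continuous_on {s0..s1} (\<lambda>x. Z x - Y x)" by (intro continuous_intros Zcont Ycont)
      ultimately obtain x where "x \<in> {s0..s1}" "Z x - Y x = 0"
        using ivt_zero[of s0 s1 "\<lambda>x. Z x - Y x", OF _ \<tau> t] by blast
      then show False using neY by auto
    qed
    have s2': "Z \<tau> * y > 0" if \<tau>: "\<tau> \<in> {s0..s1}" for \<tau>
    proof (rule ccontr)
      assume "\<not> ?thesis"
      then have "Z \<tau> * Z t \<le> 0" using Zt by simp
      then obtain x where "x \<in> {s0..s1}" "Z x = 0"
        using ivt_zero[of s0 s1 Z, OF Zcont \<tau> t] by auto
      then show False using ne0 by auto
    qed
    have btw: "min 0 (Y \<tau>) \<le> Z \<tau> \<and> Z \<tau> \<le> max 0 (Y \<tau>)" if \<tau>: "\<tau> \<in> {s0..s1}" for \<tau>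
    proof (cases "y > 0")
      case True
      then have "y < Y t" using y 3 by auto
      then have "Z \<tau> - Y \<tau> < 0" "Z \<tau> > 0" using s1'[OF \<tau>] s2'[OF \<tau>] True
        by (auto simp: zero_less_mult_iff)
      then show ?thesis by auto
    next
      case False
      then have "y < 0" "Y t < y" using y 3 by auto
      then have "Z \<tau> - Y \<tau> > 0" "Z \<tau> < 0" using s1'[OF \<tau>] s2'[OF \<tau>]
        by (auto simp: zero_less_mult_iff)
      then show ?thesis by auto
    qed
    have ZR: "\<bar>Z \<tau>\<bar> \<le> R" if "\<tau> \<in> {s0..s1}" for \<tau> using btw[OF that] R(2)[OF that] by auto
    have Zc: "charac \<eta> s0 s1 Z"
      unfolding charac_def using Zd ZR clid by (simp add: G_def)
    have "Z s0 \<in> {- pi - x0 .. pi - x0}" using btw[of s0] s01 Y0 zero_in by auto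
    then show ?thesis using Zc Zt unfolding Omega_star_def by blast
  qed
qed

end

context setting begin

lemma eta_pt:
  assumes Y: "full Y" and t: "t \<in> {s0..s1}" and nd: "min 0 (Y t) < max 0 (Y t)"
    and y: "min 0 (Y t) \<le> y" "y \<le> max 0 (Y t)"
  shows "\<bar>\<eta> t y\<bar> \<le> \<delta>"
proof -
  have c: "continuous_on {min 0 (Y t)..max 0 (Y t)} (\<eta> t)"
    by (rule continuous_on_subset[OF eta_cont[OF t]]) auto
  have "AE y in lborel. y \<in> Omega_star \<eta> s0 s1 {- pi - x0 .. pi - x0} t \<longrightarrow> \<bar>\<eta> t y\<bar> \<le> \<delta>"
    using etabd t by auto
  then have ae: "AE y in lborel. y \<in> {min 0 (Y t)..max 0 (Y t)} \<longrightarrow> \<bar>\<eta> t y\<bar> \<le> \<delta>"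
    by (rule eventually_mono) (use interval_in_Omega[OF Y t] in auto)
  have "y \<in> {min 0 (Y t)..max 0 (Y t)}" using y by auto
  then show ?thesis by (rule AE_cont_bound[OF nd c ae])
qed

lemma ebound1:
  assumes Y: "full Y" and t: "t \<in> {s0..s1}"
  shows "\<bar>oint 0 (Y t) (\<eta> t)\<bar> \<le> \<delta> * \<bar>Y t\<bar>"
proof (cases "Y t = 0")
  case True then show ?thesis by simp
next
  case False
  have "\<bar>oint 0 (Y t) (\<eta> t)\<bar> \<le> \<delta> * \<bar>Y t - 0\<bar>"
  proof (rule oint_bound[OF eta_cont[OF t]])
    fix y assume "min 0 (Y t) \<le> y" "y \<le> max 0 (Y t)"
    then show "\<bar>\<eta> t y\<bar> \<le> \<delta>" using eta_pt[OF Y t] False by (auto simp: min_def max_def split: if_splits)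
  qed
  then show ?thesis by simp
qed

lemma ebound2:
  assumes Y1: "full Y1" and Y2: "full Y2" and t: "t \<in> {s0..s1}"
  shows "\<bar>oint (Y2 t) (Y1 t) (\<eta> t)\<bar> \<le> \<delta> * \<bar>Y1 t - Y2 t\<bar>"
proof (cases "Y1 t = Y2 t")
  case True then show ?thesis by simp
next
  case False
  show ?thesis
  proof (rule oint_bound[OF eta_cont[OF t]])
    fix y assume y: "min (Y2 t) (Y1 t) \<le> y" "y \<le> max (Y2 t) (Y1 t)"
    have P1: "\<bar>\<eta> t y\<bar> \<le> \<delta>" if "min 0 (Y1 t) \<le> y" "y \<le> max 0 (Y1 t)" "Y1 t \<noteq> 0"
      using eta_pt[OF Y1 t] that by (auto simp: min_def max_def split: if_splits)
    have P2: "\<bar>\<eta> t y\<bar> \<le> \<delta>" if "min 0 (Y2 t) \<le> y" "y \<le> max 0 (Y2 t)" "Y2 t \<noteq> 0"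
      using eta_pt[OF Y2 t] that by (auto simp: min_def max_def split: if_splits)
    show "\<bar>\<eta> t y\<bar> \<le> \<delta>"
    proof (cases "y \<ge> 0")
      case True
      show ?thesis
      proof (cases "y \<le> Y1 t")
        case True
        show ?thesis
        proof (cases "Y1 t = 0")
          case False then show ?thesis using P1 True \<open>y \<ge> 0\<close> by auto
        next
          case z: True
          then have "y = 0" using True \<open>y \<ge> 0\<close> by auto
          moreover have "Y2 t \<noteq> 0" using z \<open>Y1 t \<noteq> Y2 t\<close> by simp
          ultimately show ?thesis using P2 by simp
        qed
      next
        case False
        then have y2: "y \<le> Y2 t" using y by auto
        show ?thesis
        proof (cases "Y2 t = 0")
          case False then show ?thesis using P2 y2 \<open>y \<ge> 0\<close> by auto
        next
          case z: True
          then have "y = 0" using y2 \<open>y \<ge> 0\<close> by auto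
          moreover have "Y1 t \<noteq> 0" using z \<open>Y1 t \<noteq> Y2 t\<close> by simp
          ultimately show ?thesis using P1 by simp
        qed
      qed
    next
      case False
      show ?thesis
      proof (cases "Y1 t \<le> y")
        case True
        show ?thesis
        proof (cases "Y1 t = 0")
          case nz: False then show ?thesis using P1 True False by auto
        next
          case z: True
          then show ?thesis using False True by auto
        qed
      next
        case F2: False
        then have "Y2 t \<le> y" using y by auto
        then show ?thesis using P2 False by (cases "Y2 t = 0") auto
      qed
    qed
  qed
qed

lemma flow_lip:
  assumes Y1: "full Y1" and Y2: "full Y2" and t: "t \<in> {s0..s1}"
  shows "\<bar>Y1 t - Y2 t\<bar> \<le> exp ((1 + \<delta>) * (t - s0)) * \<bar>Y1 s0 - Y2 s0\<bar>"
proof -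
  have c1: "charac \<eta> s0 s1 Y1" and c2: "charac \<eta> s0 s1 Y2" using Y1 Y2 by (auto simp: full_def)
  have "\<bar>(\<lambda>t. Y1 t - Y2 t) t\<bar> \<le> exp ((1 + \<delta>) * \<bar>t - s0\<bar>) * \<bar>(\<lambda>t. Y1 t - Y2 t) s0\<bar>"
  proof (rule gronwall[OF s01 _ _ _ _ t, where D' = "\<lambda>\<tau>. (sin (Y1 \<tau>) + oint 0 (Y1 \<tau>) (\<eta> \<tau>)) - (sin (Y2 \<tau>) + oint 0 (Y2 \<tau>) (\<eta> \<tau>))"])
    show "s0 \<in> {s0..s1}" using s01 by auto
    show "0 \<le> 1 + \<delta>" using dpos by auto
    fix \<tau> assume \<tau>: "\<tau> \<in> {s0..s1}"
    show "((\<lambda>t. Y1 t - Y2 t) has_real_derivative (sin (Y1 \<tau>) + oint 0 (Y1 \<tau>) (\<eta> \<tau>)) - (sin (Y2 \<tau>) + oint 0 (Y2 \<tau>) (\<eta> \<tau>))) (at \<tau> within {s0..s1})"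
      by (intro DERIV_diff charac_der[OF c1 \<tau>] charac_der[OF c2 \<tau>])
    have "oint 0 (Y2 \<tau>) (\<eta> \<tau>) + oint (Y2 \<tau>) (Y1 \<tau>) (\<eta> \<tau>) = oint 0 (Y1 \<tau>) (\<eta> \<tau>)"
      by (rule oint_add[OF eta_cont[OF \<tau>]])
    then have eq: "(sin (Y1 \<tau>) + oint 0 (Y1 \<tau>) (\<eta> \<tau>)) - (sin (Y2 \<tau>) + oint 0 (Y2 \<tau>) (\<eta> \<tau>))
        = (sin (Y1 \<tau>) - sin (Y2 \<tau>)) + oint (Y2 \<tau>) (Y1 \<tau>) (\<eta> \<tau>)" by linarith
    have "\<bar>(sin (Y1 \<tau>) - sin (Y2 \<tau>)) + oint (Y2 \<tau>) (Y1 \<tau>) (\<eta> \<tau>)\<bar>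
        \<le> \<bar>sin (Y1 \<tau>) - sin (Y2 \<tau>)\<bar> + \<bar>oint (Y2 \<tau>) (Y1 \<tau>) (\<eta> \<tau>)\<bar>" by (rule abs_triangle_ineq)
    moreover have "\<bar>sin (Y1 \<tau>) - sin (Y2 \<tau>)\<bar> \<le> \<bar>Y1 \<tau> - Y2 \<tau>\<bar>" by (rule sin_lip)
    moreover have "\<bar>oint (Y2 \<tau>) (Y1 \<tau>) (\<eta> \<tau>)\<bar> \<le> \<delta> * \<bar>Y1 \<tau> - Y2 \<tau>\<bar>" by (rule ebound2[OF Y1 Y2 \<tau>])
    ultimately show "\<bar>(sin (Y1 \<tau>) + oint 0 (Y1 \<tau>) (\<eta> \<tau>)) - (sin (Y2 \<tau>) + oint 0 (Y2 \<tau>) (\<eta> \<tau>))\<bar>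
        \<le> (1 + \<delta>) * \<bar>Y1 \<tau> - Y2 \<tau>\<bar>" unfolding eq by (simp add: algebra_simps)
  qed
  then show ?thesis using t by simp
qed

lemma sin_half: "sin (1/2::real) \<ge> 1/6"
  using sin_lower[of "1/2"] pi_gt3 by simp

lemma barrier:
  assumes Y: "full Y"
  shows "\<forall>t\<in>{s0..s1}. Y t \<le> pi + 1/2" "\<forall>t\<in>{s0..s1}. - Y t \<le> pi + 1/2"
proof -
  have Yc: "charac \<eta> s0 s1 Y" and Y0: "Y s0 \<in> {- pi - x0 .. pi - x0}" using Y by (auto simp: full_def)
  have Ycont: "continuous_on {s0..s1} Y" by (rule charac_cont[OF Yc])
  have eb: "\<bar>oint 0 (Y t) (\<eta> t)\<bar> \<le> \<delta> * (pi + 1/2)" if "t \<in> {s0..s1}" "\<bar>Y t\<bar> = pi + 1/2" for t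
    using ebound1[OF Y that(1)] that(2) by simp
  have small: "\<delta> * (pi + 1/2) < 1/6"
  proof -
    have "\<delta> * (pi + 1/2) \<le> 1/100 * (pi + 1/2)" using dsmall by (intro mult_right_mono) (use pi_gt3 in auto)
    also have "\<dots> < 1/6" using pi_less_4 by simp
    finally show ?thesis .
  qed
  show "\<forall>t\<in>{s0..s1}. Y t \<le> pi + 1/2"
  proof (rule first_crossing[OF s01 Ycont])
    show "Y s0 \<le> pi + 1/2" using Y0 x0 dsmall by auto
    fix t assume t: "t \<in> {s0..<s1}" and eq: "Y t = pi + 1/2"
    have tt: "t \<in> {s0..s1}" using t by auto
    have sY: "sin (Y t) = - sin (1/2)" unfolding eq by (rule sin_periodic_pi2)
    have "oint 0 (Y t) (\<eta> t) \<le> \<delta> * (pi + 1/2)" using eb[OF tt] eq by (simp add: abs_le_iff)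
    then have "sin (Y t) + oint 0 (Y t) (\<eta> t) < 0" using sY small sin_half by linarith
    then have "eventually (\<lambda>\<tau>. Y \<tau> < Y t) (at t within {t<..s1})"
      by (rule deriv_eventually_neg[OF charac_der[OF Yc tt] _ tt])
    then show "eventually (\<lambda>\<tau>. Y \<tau> \<le> pi + 1/2) (at t within {t<..s1})"
      by (rule eventually_mono) (use eq in auto)
  qed
  show "\<forall>t\<in>{s0..s1}. - Y t \<le> pi + 1/2"
  proof (rule first_crossing[OF s01])
    show "continuous_on {s0..s1} (\<lambda>t. - Y t)" by (intro continuous_intros Ycont)
    show "- Y s0 \<le> pi + 1/2" using Y0 x0 dsmall by auto
    fix t assume t: "t \<in> {s0..<s1}" and eq: "- Y t = pi + 1/2"
    have tt: "t \<in> {s0..s1}" using t by auto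
    have eq': "Y t = - pi - 1/2" using eq by simp
    have "sin (Y t) = sin (- (pi + 1/2))" unfolding eq' by simp
    also have "\<dots> = sin (1/2)" by (simp only: sin_minus sin_periodic_pi2)
    finally have sY: "sin (Y t) = sin (1/2)" .
    have "\<bar>Y t\<bar> = pi + 1/2" using eq' pi_gt3 by simp
    then have "- oint 0 (Y t) (\<eta> t) \<le> \<delta> * (pi + 1/2)" using eb[OF tt] by (simp add: abs_le_iff)
    then have "- (sin (Y t) + oint 0 (Y t) (\<eta> t)) < 0" using sY small sin_half by linarith
    moreover have "((\<lambda>t. - Y t) has_real_derivative - (sin (Y t) + oint 0 (Y t) (\<eta> t))) (at t within {s0..s1})"
      by (intro DERIV_minus charac_der[OF Yc tt])
    ultimately have "eventually (\<lambda>\<tau>. - Y \<tau> < - Y t) (at t within {t<..s1})"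
      using deriv_eventually_neg tt by blast
    then show "eventually (\<lambda>\<tau>. - Y \<tau> \<le> pi + 1/2) (at t within {t<..s1})"
      by (rule eventually_mono) (use eq in auto)
  qed
qed

end

definition K3 :: real where "K3 = 3 * sqrt 3 / 8"
definition b1 :: "real \<Rightarrow> real \<Rightarrow> real \<Rightarrow> real" where
  "b1 C \<theta> z = sin z * (sin (z/2))^2 * exp (C * z / \<theta>)"
definition d1 :: "real \<Rightarrow> real \<Rightarrow> real \<Rightarrow> real" where
  "d1 C \<theta> z = (cos z * (sin (z/2))^2 + sin z * sin (z/2) * cos (z/2) + C / \<theta> * sin z * (sin (z/2))^2) * exp (C * z / \<theta>)"
definition b3 :: "real \<Rightarrow> real \<Rightarrow> real \<Rightarrow> real" where
  "b3 C \<theta> z = K3 * exp (C * z / \<theta>)"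
definition b4 :: "real \<Rightarrow> real \<Rightarrow> real \<Rightarrow> real" where
  "b4 C \<theta> z = K3 * exp (C * (2 * pi - z) / \<theta>)"

lemma K3_pos: "K3 > 0" by (simp add: K3_def)

lemma red_id: "- pi \<le> z \<Longrightarrow> z < pi \<Longrightarrow> red2pi z = z"
  unfolding red2pi_def by (simp add: floor_eq_iff field_simps)

lemma red_p: "pi \<le> z \<Longrightarrow> z < 3 * pi \<Longrightarrow> red2pi z = z - 2 * pi"
proof -
  assume "pi \<le> z" "z < 3 * pi"
  then have "\<lfloor>(z + pi) / (2 * pi)\<rfloor> = 1" by (simp add: floor_eq_iff field_simps)
  then show ?thesis unfolding red2pi_def by simp
qed

lemma red_m: "- 3 * pi \<le> z \<Longrightarrow> z < - pi \<Longrightarrow> red2pi z = z + 2 * pi"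
proof -
  assume "- 3 * pi \<le> z" "z < - pi"
  then have "\<lfloor>(z + pi) / (2 * pi)\<rfloor> = -1" by (simp add: floor_eq_iff field_simps)
  then show ?thesis unfolding red2pi_def by simp
qed

lemma sin_23: "sin (2 * pi / 3) = sqrt 3 / 2"
proof -
  have e: "2 * pi / 3 = pi - pi / 3" by simp
  show ?thesis unfolding e by (simp only: sin_pi_minus sin_60)
qed

lemma cos_23: "cos (2 * pi / 3) = - 1/2"
proof -
  have e: "2 * pi / 3 = pi - pi / 3" by simp
  show ?thesis unfolding e by (simp only: cos_pi_minus cos_60)
qed

lemma K3_eq: "sin (2 * pi / 3) * (sin (2 * pi / 3 / 2))^2 = K3"
proof -
  have "2 * pi / 3 / 2 = pi / 3" by simp
  then show ?thesis by (simp add: sin_23 sin_60 K3_def power2_eq_square)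
qed

lemma pi_third_gt1: "pi / 3 > 1" using pi_gt3 by simp

lemma W1: "0 \<le> z \<Longrightarrow> z \<le> 2 * pi / 3 \<Longrightarrow> Wt C \<theta> z = b1 C \<theta> z"
proof -
  assume z: "0 \<le> z" "z \<le> 2 * pi / 3"
  have r: "red2pi z = z" using z pi_gt3 by (intro red_id) auto
  have "sin z \<ge> 0" using z pi_gt3 by (intro sin_ge_zero) auto
  then show ?thesis using z unfolding Wt_def Wm1_def Wtilde_def b1_def r Let_def by simp
qed

lemma W2: "- 2 * pi / 3 \<le> z \<Longrightarrow> z \<le> 0 \<Longrightarrow> Wt C \<theta> z = b1 C \<theta> (- z)"
proof -
  assume z: "- 2 * pi / 3 \<le> z" "z \<le> 0"
  have r: "red2pi z = z" using z pi_gt3 by (intro red_id) auto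
  have "sin (- z) \<ge> 0" using z pi_gt3 by (intro sin_ge_zero) auto
  then show ?thesis using z unfolding Wt_def Wm1_def Wtilde_def b1_def r Let_def by simp
qed

lemma W3: "2 * pi / 3 \<le> z \<Longrightarrow> z \<le> pi \<Longrightarrow> Wt C \<theta> z = b3 C \<theta> z"
proof -
  assume z: "2 * pi / 3 \<le> z" "z \<le> pi"
  show ?thesis
  proof (cases "z = pi")
    case True
    have r: "red2pi z = - pi" using True red_p[of z] by simp
    have "\<not> pi \<le> 2 * pi / 3" by simp
    then show ?thesis using True unfolding Wt_def Wm1_def Wtilde_def b3_def r Let_def K3_def by simp
  next
    case False
    have r: "red2pi z = z" using z False pi_gt3 by (intro red_id) auto
    show ?thesis
    proof (cases "z = 2 * pi / 3")
      case True
      have a: "\<bar>z\<bar> \<le> 2*pi/3" using z True by (simp add: abs_if)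
      have s1: "sin z = sqrt 3 / 2" unfolding True by (rule sin_23)
      have zz: "z / 2 = pi / 3" using True by simp
      have s2: "(sin (z/2))^2 = 3/4" unfolding zz by (simp add: sin_60 power_divide)
      have b: "\<bar>sin z\<bar> * (sin (z/2))^2 = K3" unfolding s1 s2 K3_def by simp
      have z0: "z \<ge> 0" using z(1) pi_gt_zero by linarith
      have c: "exp (C * \<bar>z\<bar> / \<theta>) = exp (C * z / \<theta>)" using z0 by simp
      show ?thesis unfolding Wt_def Wm1_def Wtilde_def b3_def r Let_def using a b c by simp
    next
      case False
      then have "\<not> \<bar>z\<bar> \<le> 2 * pi / 3" using z by auto
      then show ?thesis using z unfolding Wt_def Wm1_def Wtilde_def b3_def r Let_def K3_def by simp
    qed
  qed
qed

lemma W5: "- pi \<le> z \<Longrightarrow> z \<le> - 2 * pi / 3 \<Longrightarrow> Wt C \<theta> z = b3 C \<theta> (- z)"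
proof -
  assume z: "- pi \<le> z" "z \<le> - 2 * pi / 3"
  have r: "red2pi z = z" using z pi_gt3 by (intro red_id) auto
  show ?thesis
  proof (cases "z = - 2 * pi / 3")
    case True
    have a: "\<bar>z\<bar> \<le> 2*pi/3" using True by simp
    have s1: "sin z = - (sqrt 3 / 2)" using True sin_23 by simp
    have zz: "z / 2 = - (pi / 3)" using True by simp
    have s2: "(sin (z/2))^2 = 3/4" unfolding zz by (simp add: sin_60 power_divide)
    have b: "\<bar>sin z\<bar> * (sin (z/2))^2 = K3" unfolding s1 s2 K3_def by simp
    have c: "exp (C * \<bar>z\<bar> / \<theta>) = exp (C * (- z) / \<theta>)" using True by simp
    show ?thesis unfolding Wt_def Wm1_def Wtilde_def b3_def r Let_def using a b c by simp
  next
    case False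
    then have "\<not> \<bar>z\<bar> \<le> 2 * pi / 3" using z by auto
    then show ?thesis using z unfolding Wt_def Wm1_def Wtilde_def b3_def r Let_def K3_def by simp
  qed
qed

lemma W4: "pi \<le> z \<Longrightarrow> z \<le> pi + 1 \<Longrightarrow> Wt C \<theta> z = b4 C \<theta> z"
proof -
  assume z: "pi \<le> z" "z \<le> pi + 1"
  have r: "red2pi z = z - 2 * pi" using z pi_gt3 by (intro red_p) auto
  have "\<not> \<bar>z - 2 * pi\<bar> \<le> 2 * pi / 3" using z pi_third_gt1 by auto
  moreover have "\<bar>z - 2 * pi\<bar> = 2 * pi - z" using z pi_gt3 by auto
  ultimately show ?thesis using z unfolding Wt_def Wm1_def Wtilde_def b4_def r Let_def K3_def by simp
qed

lemma W6: "- pi - 1 \<le> z \<Longrightarrow> z \<le> - pi \<Longrightarrow> Wt C \<theta> z = b4 C \<theta> (- z)"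
proof -
  assume z: "- pi - 1 \<le> z" "z \<le> - pi"
  show ?thesis
  proof (cases "z = - pi")
    case True
    have r: "red2pi z = - pi" using True red_id[of z] by simp
    have "\<not> pi \<le> 2 * pi / 3" by simp
    then show ?thesis using True unfolding Wt_def Wm1_def Wtilde_def b4_def r Let_def K3_def by simp
  next
    case False
    have r: "red2pi z = z + 2 * pi" using z False pi_gt3 by (intro red_m) auto
    have "\<not> \<bar>z + 2 * pi\<bar> \<le> 2 * pi / 3" using z pi_third_gt1 by auto
    moreover have "\<bar>z + 2 * pi\<bar> = 2 * pi + z" using z pi_gt3 by auto
    ultimately show ?thesis using z unfolding Wt_def Wm1_def Wtilde_def b4_def r Let_def K3_def by simp
  qed
qed

lemma Wt_nonneg: "Wt C \<theta> z \<ge> 0"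
  unfolding Wt_def Wm1_def Wtilde_def Let_def by auto

lemma Db1: "\<theta> \<noteq> 0 \<Longrightarrow> (b1 C \<theta> has_real_derivative d1 C \<theta> z) (at z)"
  unfolding b1_def d1_def
  by (rule derivative_eq_intros refl | simp)+ (simp add: algebra_simps power2_eq_square)

lemma Db3: "\<theta> \<noteq> 0 \<Longrightarrow> (b3 C \<theta> has_real_derivative C / \<theta> * b3 C \<theta> z) (at z)"
  unfolding b3_def by (rule derivative_eq_intros refl | simp)+

lemma Db4: "\<theta> \<noteq> 0 \<Longrightarrow> (b4 C \<theta> has_real_derivative - (C / \<theta>) * b4 C \<theta> z) (at z)"
  unfolding b4_def by (rule derivative_eq_intros refl | simp)+


lemma pos1:
  fixes C \<theta> \<theta>' \<delta> z e :: real
  assumes z: "0 < z" "z \<le> 2 * pi / 3" and e: "\<bar>e\<bar> \<le> \<delta> * z"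
    and d: "\<delta> \<ge> 0" "9 * \<delta> < \<theta>'" "3 * \<delta> \<le> 1" and k: "C / \<theta> \<ge> 0"
  shows "d1 C \<theta> z * (sin z + e) - b1 C \<theta> z * (1 - \<theta>' + 2 * cos z) > 0"
proof -
  define s where "s = sin (z/2)"
  define c where "c = cos (z/2)"
  define S where "S = sin z"
  define Cz where "Cz = cos z"
  define E where "E = exp (C * z / \<theta>)"
  define k where "k = C / \<theta>"
  have S2: "S = 2 * s * c" unfolding S_def s_def c_def using sin_double[of "z/2"] by simp
  have C2: "Cz = 2 * c^2 - 1" unfolding Cz_def c_def using cos_double_cos[of "z/2"] by simp
  define A where "A = 1 + 2 * Cz + k * S"
  have d1e: "d1 C \<theta> z = s^2 * E * A"
  proof -
    have "S * s * c = s^2 * (1 + Cz)" unfolding S2 C2 by (simp add: algebra_simps power2_eq_square)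
    then have "d1 C \<theta> z = (Cz * s^2 + s^2 * (1 + Cz) + k * S * s^2) * E"
      unfolding d1_def by (simp add: S_def Cz_def s_def c_def E_def k_def)
    then show ?thesis unfolding A_def by (simp add: algebra_simps)
  qed
  have b1e: "b1 C \<theta> z = S * s^2 * E" unfolding b1_def S_def s_def E_def by simp
  define Q where "Q = k * S^2 + \<theta>' * S + A * e"
  have expr: "d1 C \<theta> z * (sin z + e) - b1 C \<theta> z * (1 - \<theta>' + 2 * cos z) = s^2 * E * Q"
    unfolding d1e b1e Q_def A_def by (simp add: S_def[symmetric] Cz_def[symmetric] algebra_simps power2_eq_square)
  have Spos: "S > 0" unfolding S_def using z pi_gt3 by (intro sin_gt_zero) auto
  have zS: "z \<le> 3 * S" unfolding S_def using sin_lower[of z] z by auto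
  have Cz1: "Cz \<ge> - 1/2"
  proof -
    have "cos (2 * pi / 3) \<le> cos z" using z by (intro cos_monotone_0_pi_le) auto
    then show ?thesis by (simp add: Cz_def cos_23)
  qed
  have k0: "k \<ge> 0" using k by (simp add: k_def)
  have S1: "S \<le> 1" by (simp add: S_def)
  have Cz2: "Cz \<le> 1" by (simp add: Cz_def)
  have A0: "A \<ge> 0" unfolding A_def using Cz1 k0 Spos by simp
  have A3: "A \<le> 3 + k * S" unfolding A_def using Cz2 by simp
  have "\<bar>A * e\<bar> = A * \<bar>e\<bar>" using A0 by (simp add: abs_mult)
  then have "- (A * \<bar>e\<bar>) \<le> A * e" using abs_ge_minus_self[of "A * e"] by linarith
  moreover have "A * \<bar>e\<bar> \<le> A * (\<delta> * z)" by (rule mult_left_mono[OF e A0])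
  moreover have "A * (\<delta> * z) \<le> (3 + k * S) * (3 * \<delta> * S)"
  proof (rule mult_mono[OF A3])
    have "\<delta> * z \<le> \<delta> * (3 * S)" by (rule mult_left_mono[OF zS d(1)])
    then show "\<delta> * z \<le> 3 * \<delta> * S" by (simp add: algebra_simps)
    show "0 \<le> 3 + k * S" using k0 Spos by simp
    show "0 \<le> \<delta> * z" using d(1) z by simp
  qed
  ultimately have Ae: "A * e \<ge> - ((3 + k * S) * (3 * \<delta> * S))" by linarith
  have "(3 + k * S) * (3 * \<delta> * S) = 9 * \<delta> * S + 3 * \<delta> * (k * S^2)" by (simp add: algebra_simps power2_eq_square)
  moreover have "9 * \<delta> * S < \<theta>' * S" using d(2) Spos by (intro mult_strict_right_mono) auto
  moreover have "3 * \<delta> * (k * S^2) \<le> 1 * (k * S^2)" using d(3) k0 by (intro mult_right_mono) auto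
  ultimately have "Q > 0" unfolding Q_def using Ae by linarith
  moreover have "s > 0" unfolding s_def using z pi_gt3 by (intro sin_gt_zero) auto
  moreover have "E > 0" by (simp add: E_def)
  ultimately show ?thesis unfolding expr by simp
qed

lemma pos3:
  fixes C \<theta> \<theta>' \<delta> z e :: real
  assumes z: "2 * pi / 3 \<le> z" "z \<le> pi" and e: "\<bar>e\<bar> \<le> 4 * \<delta>"
    and k: "C / \<theta> \<ge> 0" and kd: "4 * (C / \<theta>) * \<delta> < \<theta>'"
  shows "(C / \<theta> * b3 C \<theta> z) * (sin z + e) - b3 C \<theta> z * (1 - \<theta>' + 2 * cos z) > 0"
proof -
  define k where "k = C / \<theta>"
  have S: "sin z \<ge> 0" using z pi_gt3 by (intro sin_ge_zero) auto
  have Cz: "cos z \<le> - 1/2"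
  proof -
    have "cos z \<le> cos (2 * pi / 3)" using z by (intro cos_monotone_0_pi_le) auto
    then show ?thesis by (simp add: cos_23)
  qed
  have ke: "k * e \<ge> - (k * (4 * \<delta>))"
  proof -
    have k0: "k \<ge> 0" using k by (simp add: k_def)
    have "\<bar>k * e\<bar> \<le> k * (4 * \<delta>)" using e k0 by (simp add: abs_mult mult_left_mono)
    then show ?thesis by linarith
  qed
  have kS: "k * sin z \<ge> 0" using k S unfolding k_def by (rule mult_nonneg_nonneg)
  have "(k * b3 C \<theta> z) * (sin z + e) - b3 C \<theta> z * (1 - \<theta>' + 2 * cos z)
      = b3 C \<theta> z * (k * sin z + k * e - 1 - 2 * cos z + \<theta>')" by (simp add: algebra_simps)
  moreover have "k * sin z + k * e - 1 - 2 * cos z + \<theta>' > 0" using ke kS Cz kd by (simp add: k_def)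
  moreover have "b3 C \<theta> z > 0" by (simp add: b3_def K3_pos)
  ultimately show ?thesis by (simp add: k_def)
qed

lemma pos4:
  fixes C \<theta> \<theta>' \<delta> z e :: real
  assumes z: "pi \<le> z" "z \<le> pi + 1" and e: "\<bar>e\<bar> \<le> 5 * \<delta>"
    and k: "C / \<theta> \<ge> 0" and kd: "5 * (C / \<theta>) * \<delta> < \<theta>'"
  shows "(- (C / \<theta>) * b4 C \<theta> z) * (sin z + e) - b4 C \<theta> z * (1 - \<theta>' + 2 * cos z) > 0"
proof -
  define k where "k = C / \<theta>"
  have S: "sin z \<le> 0" using z pi_gt3 by (intro sin_le_zero) auto
  have Cz: "cos z \<le> - 1/2"
  proof -
    have "cos (2 * pi - z) \<le> cos (2 * pi / 3)" using z pi_third_gt1 by (intro cos_monotone_0_pi_le) auto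
    moreover have "cos (2 * pi - z) = cos z" by (simp add: cos_diff)
    ultimately show ?thesis by (simp add: cos_23)
  qed
  have ke: "- (k * e) \<ge> - (k * (5 * \<delta>))"
  proof -
    have k0: "k \<ge> 0" using k by (simp add: k_def)
    have "\<bar>k * e\<bar> \<le> k * (5 * \<delta>)" using e k0 by (simp add: abs_mult mult_left_mono)
    then show ?thesis by linarith
  qed
  have "k * sin z \<le> 0" using k S unfolding k_def by (rule mult_nonneg_nonpos)
  then have kS: "- (k * sin z) \<ge> 0" by simp
  have "(- k * b4 C \<theta> z) * (sin z + e) - b4 C \<theta> z * (1 - \<theta>' + 2 * cos z)
      = b4 C \<theta> z * (- (k * sin z) - k * e - 1 - 2 * cos z + \<theta>')" by (simp add: algebra_simps)
  moreover have "- (k * sin z) - k * e - 1 - 2 * cos z + \<theta>' > 0"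
  proof -
    have "5 * (k * \<delta>) < \<theta>'" using kd by (simp add: k_def algebra_simps)
    moreover have "k * (5 * \<delta>) = 5 * (k * \<delta>)" by simp
    ultimately show ?thesis using ke kS Cz by linarith
  qed
  moreover have "b4 C \<theta> z > 0" by (simp add: b4_def K3_pos)
  ultimately show ?thesis by (simp add: k_def)
qed


lemma Wt_cont: assumes th: "\<theta> \<noteq> 0" shows "continuous_on {- pi - 1 .. pi + 1} (Wt C \<theta>)"
proof -
  have c1: "continuous_on {0 .. 2*pi/3} (Wt C \<theta>)"
    by (rule continuous_on_cong[THEN iffD2, OF refl, of _ _ "b1 C \<theta>"]) (auto simp: W1 b1_def intro!: continuous_intros th)
  have c2: "continuous_on {- 2*pi/3 .. 0} (Wt C \<theta>)"
    by (rule continuous_on_cong[THEN iffD2, OF refl, of _ _ "\<lambda>z. b1 C \<theta> (- z)"]) (auto simp: W2 b1_def intro!: continuous_intros th)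
  have c3: "continuous_on {2*pi/3 .. pi} (Wt C \<theta>)"
    by (rule continuous_on_cong[THEN iffD2, OF refl, of _ _ "b3 C \<theta>"]) (auto simp: W3 b3_def intro!: continuous_intros th)
  have c5: "continuous_on {- pi .. - 2*pi/3} (Wt C \<theta>)"
    by (rule continuous_on_cong[THEN iffD2, OF refl, of _ _ "\<lambda>z. b3 C \<theta> (- z)"]) (auto simp: W5 b3_def intro!: continuous_intros th)
  have c4: "continuous_on {pi .. pi + 1} (Wt C \<theta>)"
    by (rule continuous_on_cong[THEN iffD2, OF refl, of _ _ "b4 C \<theta>"]) (auto simp: W4 b4_def intro!: continuous_intros th)
  have c6: "continuous_on {- pi - 1 .. - pi} (Wt C \<theta>)"
    by (rule continuous_on_cong[THEN iffD2, OF refl, of _ _ "\<lambda>z. b4 C \<theta> (- z)"]) (auto simp: W6 b4_def intro!: continuous_intros th)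
  have "continuous_on ({- pi - 1 .. - pi} \<union> {- pi .. - 2*pi/3} \<union> {- 2*pi/3 .. 0} \<union> {0 .. 2*pi/3} \<union> {2*pi/3 .. pi} \<union> {pi .. pi + 1}) (Wt C \<theta>)"
    by (intro continuous_on_closed_Un c1 c2 c3 c4 c5 c6 closed_Un closed_atLeastAtMost)
  moreover have "{- pi - 1 .. - pi} \<union> {- pi .. - 2*pi/3} \<union> {- 2*pi/3 .. 0} \<union> {0 .. 2*pi/3} \<union> {2*pi/3 .. pi} \<union> {pi .. pi + 1}
      = {- pi - 1 .. pi + 1}" by (auto; insert pi_gt_zero; linarith)
  ultimately show ?thesis by simp
qed

locale weights = setting +
  fixes C \<theta> \<theta>' :: real
  assumes C1: "C \<ge> 1" and th0: "0 < \<theta>" and thth: "\<theta> < \<theta>'" and th1: "\<theta>' < 1"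
    and dC: "\<delta> \<le> \<theta> * \<theta>' / (100 * C)"
begin

lemma k_pos: "C / \<theta> > 0" using C1 th0 by simp

lemma kd: "C / \<theta> * \<delta> \<le> \<theta>' / 100"
proof -
  have "C / \<theta> * \<delta> \<le> C / \<theta> * (\<theta> * \<theta>' / (100 * C))" using dC k_pos by (intro mult_left_mono) auto
  also have "\<dots> = \<theta>' / 100" using C1 th0 by (simp add: field_simps)
  finally show ?thesis .
qed

lemma d_th: "\<delta> \<le> \<theta>' / 100"
proof -
  have "\<theta> * \<theta>' \<le> C * \<theta>'" using C1 th0 thth th1 by (intro mult_right_mono) auto
  then have "\<theta> * \<theta>' / (100 * C) \<le> C * \<theta>' / (100 * C)" using C1 by (intro divide_right_mono) auto
  also have "\<dots> = \<theta>' / 100" using C1 by simp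
  finally have "\<theta> * \<theta>' / (100 * C) \<le> \<theta>' / 100" .
  then show ?thesis using dC by linarith
qed

lemma branch_ev:
  fixes f f' ex :: "real \<Rightarrow> real" and Y :: "real \<Rightarrow> real"
  assumes Ycont: "continuous_on {s0..s1} Y" and t: "t \<in> {s0..<s1}"
    and fW: "\<And>z. z \<in> {lo..hi} \<Longrightarrow> Wt C \<theta> z = f z"
    and fd: "(f has_real_derivative f' (Y t)) (at (Y t))"
    and Yd: "(Y has_real_derivative V) (at t within {s0..s1})"
    and exd: "(ex has_real_derivative ex t * q) (at t within {s0..s1})" and expos: "ex t > 0"
    and pos: "Y t \<in> {lo..hi} \<Longrightarrow> f' (Y t) * V + f (Y t) * q > 0"
  shows "eventually (\<lambda>\<tau>. Y \<tau> \<in> {lo..hi} \<longrightarrow> Wt C \<theta> (Y \<tau>) * ex \<tau> > Wt C \<theta> (Y t) * ex t) (at t within {t<..s1})"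
proof (cases "Y t \<in> {lo..hi}")
  case True
  have tt: "t \<in> {s0..s1}" using t by auto
  have d0: "((\<lambda>\<tau>. f (Y \<tau>) * ex \<tau>) has_real_derivative (f' (Y t) * V) * ex t + (ex t * q) * f (Y t)) (at t within {s0..s1})"
    by (rule DERIV_mult[OF DERIV_chain2[OF fd Yd] exd])
  have eq: "(f' (Y t) * V) * ex t + (ex t * q) * f (Y t) = ex t * (f' (Y t) * V + f (Y t) * q)"
    by (simp add: algebra_simps)
  have d: "((\<lambda>\<tau>. f (Y \<tau>) * ex \<tau>) has_real_derivative ex t * (f' (Y t) * V + f (Y t) * q)) (at t within {s0..s1})"
    by (rule DERIV_cong[OF d0 eq])
  have p: "ex t * (f' (Y t) * V + f (Y t) * q) > 0" using pos[OF True] expos by simp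
  have "eventually (\<lambda>\<tau>. (\<lambda>\<tau>. f (Y \<tau>) * ex \<tau>) \<tau> > (\<lambda>\<tau>. f (Y \<tau>) * ex \<tau>) t) (at t within {t<..s1})"
    by (rule deriv_eventually_pos[OF d p tt])
  then show ?thesis
    by (rule eventually_mono) (use fW True in auto)
next
  case False
  have "continuous (at t within {s0..s1}) Y" using Ycont t by (simp add: continuous_on_eq_continuous_within)
  then have "(Y \<longlongrightarrow> Y t) (at t within {s0..s1})" by (simp add: continuous_within)
  moreover have "open (- {lo..hi})" by auto
  ultimately have "eventually (\<lambda>\<tau>. Y \<tau> \<in> - {lo..hi}) (at t within {s0..s1})"
    using False by (intro topological_tendstoD) auto
  then have "eventually (\<lambda>\<tau>. Y \<tau> \<in> - {lo..hi}) (at t within {t<..s1})"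
    by (rule filter_leD[OF at_le, rotated]) (use t in auto)
  then show ?thesis by (rule eventually_mono) auto
qed

end

lemma alg1: fixes k b s e t c :: real shows "- (k * b) * (s + e) + b * (- (1 - t) - 2 * c) = (k * b) * (- s + - e) - b * (1 - t + 2 * c)"
  by (simp add: algebra_simps)

lemma alg2: fixes k b s e t c :: real shows "(k * b) * (s + e) + b * (- (1 - t) - 2 * c) = (- k * b) * (- s + - e) - b * (1 - t + 2 * c)"
  by (simp add: algebra_simps)

context weights begin

lemma cstw: "9 * \<delta> < \<theta>'" "3 * \<delta> \<le> 1" "4 * (C / \<theta>) * \<delta> < \<theta>'" "5 * (C / \<theta>) * \<delta> < \<theta>'" "C / \<theta> \<ge> 0"
proof -
  have a: "C / \<theta> * \<delta> \<le> \<theta>' / 100" by (rule kd)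
  have p: "\<theta>' > 0" using thth th0 by simp
  have e4: "4 * (C / \<theta>) * \<delta> = 4 * (C / \<theta> * \<delta>)" "5 * (C / \<theta>) * \<delta> = 5 * (C / \<theta> * \<delta>)" by simp_all
  show "9 * \<delta> < \<theta>'" using d_th p by linarith
  show "3 * \<delta> \<le> 1" using dsmall by linarith
  show "4 * (C / \<theta>) * \<delta> < \<theta>'" unfolding e4 using a p by linarith
  show "5 * (C / \<theta>) * \<delta> < \<theta>'" unfolding e4 using a p by linarith
  show "C / \<theta> \<ge> 0" using k_pos by simp
qed

lemma main_mono:
  assumes Y: "full Y" and t: "t \<in> {s0..s1}"
  shows "Wt C \<theta> (Y s0) * exp (- (1 - \<theta>') * (s0 - s0) - integral {s0..s0} (\<lambda>r. 2 * cos (Y r)))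
       \<le> Wt C \<theta> (Y t) * exp (- (1 - \<theta>') * (t - s0) - integral {s0..t} (\<lambda>r. 2 * cos (Y r)))"
proof -
  define P where "P \<tau> = integral {s0..\<tau>} (\<lambda>r. 2 * cos (Y r))" for \<tau>
  define ex where "ex \<tau> = exp (- (1 - \<theta>') * (\<tau> - s0) - P \<tau>)" for \<tau>
  have Yc: "charac \<eta> s0 s1 Y" using Y by (simp add: full_def)
  have Ycont: "continuous_on {s0..s1} Y" by (rule charac_cont[OF Yc])
  have bnd: "\<bar>Y \<tau>\<bar> \<le> pi + 1/2" if "\<tau> \<in> {s0..s1}" for \<tau> using barrier[OF Y] that by force
  have cosc: "continuous_on {s0..s1} (\<lambda>r. 2 * cos (Y r))" by (intro continuous_intros Ycont)
  have Pd: "(P has_real_derivative 2 * cos (Y \<tau>)) (at \<tau> within {s0..s1})" if "\<tau> \<in> {s0..s1}" for \<tau>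
    unfolding P_def by (rule integral_has_real_derivative[OF cosc that])
  have Pcont: "continuous_on {s0..s1} P"
    unfolding P_def by (rule indefinite_integral_continuous_1[OF integrable_continuous_real[OF cosc]])
  have exd: "(ex has_real_derivative ex \<tau> * (- (1 - \<theta>') - 2 * cos (Y \<tau>))) (at \<tau> within {s0..s1})"
    if \<tau>: "\<tau> \<in> {s0..s1}" for \<tau>
  proof -
    have u: "((\<lambda>\<tau>. - (1 - \<theta>') * (\<tau> - s0) - P \<tau>) has_real_derivative (- (1 - \<theta>')) * (1 - 0) - 2 * cos (Y \<tau>)) (at \<tau> within {s0..s1})"
      by (intro DERIV_diff DERIV_cmult DERIV_ident DERIV_const Pd \<tau>)
    have "((\<lambda>\<tau>. exp (- (1 - \<theta>') * (\<tau> - s0) - P \<tau>)) has_real_derivative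
        exp (- (1 - \<theta>') * (\<tau> - s0) - P \<tau>) * ((- (1 - \<theta>')) * (1 - 0) - 2 * cos (Y \<tau>))) (at \<tau> within {s0..s1})"
      by (rule DERIV_chain2[OF DERIV_exp u])
    then show ?thesis unfolding ex_def by simp
  qed
  have expos: "ex \<tau> > 0" for \<tau> by (simp add: ex_def)
  have excont: "continuous_on {s0..s1} ex" unfolding ex_def by (intro continuous_intros Pcont)
  have gcont: "continuous_on {s0..s1} (\<lambda>\<tau>. Wt C \<theta> (Y \<tau>) * ex \<tau>)"
  proof (intro continuous_intros excont)
    show "continuous_on {s0..s1} (\<lambda>\<tau>. Wt C \<theta> (Y \<tau>))"
      by (rule continuous_on_compose2[OF Wt_cont Ycont]) (use th0 bnd in force)+
  qed
  have "(\<lambda>\<tau>. Wt C \<theta> (Y \<tau>) * ex \<tau>) s0 \<le> (\<lambda>\<tau>. Wt C \<theta> (Y \<tau>) * ex \<tau>) t"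
  proof (rule right_local_mono[OF gcont])
    fix \<tau>0 assume \<tau>0: "\<tau>0 \<in> {s0..<s1}"
    have tt: "\<tau>0 \<in> {s0..s1}" using \<tau>0 by auto
    define y where "y = Y \<tau>0"
    show "eventually (\<lambda>\<tau>. Wt C \<theta> (Y \<tau>) * ex \<tau> \<ge> Wt C \<theta> (Y \<tau>0) * ex \<tau>0) (at \<tau>0 within {\<tau>0<..s1})"
    proof (cases "y = 0")
      case True
      have "Wt C \<theta> (Y \<tau>0) = 0" using True W1[of 0 C \<theta>] by (simp add: y_def b1_def)
      then show ?thesis using Wt_nonneg expos by (intro always_eventually) (simp add: less_imp_le)
    next
      case False
      define e where "e = oint 0 y (\<eta> \<tau>0)"
      define V where "V = sin y + e"
      define q where "q = - (1 - \<theta>') - 2 * cos y"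
      have eb: "\<bar>e\<bar> \<le> \<delta> * \<bar>y\<bar>" unfolding e_def y_def by (rule ebound1[OF Y tt])
      have yb: "\<bar>y\<bar> \<le> pi + 1/2" using bnd[OF tt] by (simp add: y_def)
      have eb4: "\<bar>e\<bar> \<le> 4 * \<delta>"
      proof -
        have "\<delta> * \<bar>y\<bar> \<le> \<delta> * 4" using yb pi_approx dpos by (intro mult_left_mono) auto
        then show ?thesis using eb by simp
      qed
      have eb5: "\<bar>e\<bar> \<le> 5 * \<delta>" using eb4 dpos by simp
      have Yd: "(Y has_real_derivative V) (at \<tau>0 within {s0..s1})"
        using charac_der[OF Yc tt] by (simp add: V_def e_def y_def)
      have ed: "(ex has_real_derivative ex \<tau>0 * q) (at \<tau>0 within {s0..s1})"
        using exd[OF tt] by (simp add: q_def y_def)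
      note BE = branch_ev[OF Ycont \<tau>0 _ _ Yd ed expos[of \<tau>0]]
      have th0': "\<theta> \<noteq> 0" using th0 by simp
      have B1: "eventually (\<lambda>\<tau>. Y \<tau> \<in> {0..2*pi/3} \<longrightarrow> Wt C \<theta> (Y \<tau>) * ex \<tau> > Wt C \<theta> (Y \<tau>0) * ex \<tau>0) (at \<tau>0 within {\<tau>0<..s1})"
      proof (rule BE[where f="b1 C \<theta>" and f'="d1 C \<theta>"])
        show "\<And>z. z \<in> {0..2*pi/3} \<Longrightarrow> Wt C \<theta> z = b1 C \<theta> z" using W1 by auto
        show "(b1 C \<theta> has_real_derivative d1 C \<theta> (Y \<tau>0)) (at (Y \<tau>0))" by (rule Db1[OF th0'])
        assume "Y \<tau>0 \<in> {0..2*pi/3}"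
        then have z: "0 < y" "y \<le> 2*pi/3" using False by (auto simp: y_def)
        have "d1 C \<theta> y * (sin y + e) - b1 C \<theta> y * (1 - \<theta>' + 2 * cos y) > 0"
          by (rule pos1[OF z _ _ cstw(1,2,5)]) (use eb z dpos in auto)
        then show "d1 C \<theta> (Y \<tau>0) * V + b1 C \<theta> (Y \<tau>0) * q > 0"
          by (simp add: V_def q_def y_def[symmetric] algebra_simps)
      qed
      have B2: "eventually (\<lambda>\<tau>. Y \<tau> \<in> {-2*pi/3..0} \<longrightarrow> Wt C \<theta> (Y \<tau>) * ex \<tau> > Wt C \<theta> (Y \<tau>0) * ex \<tau>0) (at \<tau>0 within {\<tau>0<..s1})"
      proof (rule BE[where f="\<lambda>z. b1 C \<theta> (- z)" and f'="\<lambda>z. - d1 C \<theta> (- z)"])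
        show "\<And>z. z \<in> {-2*pi/3..0} \<Longrightarrow> Wt C \<theta> z = b1 C \<theta> (- z)" using W2 by auto
        have "((\<lambda>z. b1 C \<theta> (- z)) has_real_derivative d1 C \<theta> (- Y \<tau>0) * (- 1)) (at (Y \<tau>0))"
          by (rule DERIV_chain2[OF Db1[OF th0'] DERIV_minus[OF DERIV_ident]])
        then show "((\<lambda>z. b1 C \<theta> (- z)) has_real_derivative - d1 C \<theta> (- Y \<tau>0)) (at (Y \<tau>0))" by simp
        assume "Y \<tau>0 \<in> {-2*pi/3..0}"
        then have z: "0 < - y" "- y \<le> 2*pi/3" using False by (auto simp: y_def)
        have "d1 C \<theta> (- y) * (sin (- y) + (- e)) - b1 C \<theta> (- y) * (1 - \<theta>' + 2 * cos (- y)) > 0"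
          by (rule pos1[OF z _ _ cstw(1,2,5)]) (use eb z dpos in auto)
        then show "- d1 C \<theta> (- Y \<tau>0) * V + b1 C \<theta> (- Y \<tau>0) * q > 0"
          by (simp add: V_def q_def y_def[symmetric] algebra_simps)
      qed
      have B3: "eventually (\<lambda>\<tau>. Y \<tau> \<in> {2*pi/3..pi} \<longrightarrow> Wt C \<theta> (Y \<tau>) * ex \<tau> > Wt C \<theta> (Y \<tau>0) * ex \<tau>0) (at \<tau>0 within {\<tau>0<..s1})"
      proof (rule BE[where f="b3 C \<theta>" and f'="\<lambda>z. C / \<theta> * b3 C \<theta> z"])
        show "\<And>z. z \<in> {2*pi/3..pi} \<Longrightarrow> Wt C \<theta> z = b3 C \<theta> z" using W3 by auto
        show "(b3 C \<theta> has_real_derivative C / \<theta> * b3 C \<theta> (Y \<tau>0)) (at (Y \<tau>0))" by (rule Db3[OF th0'])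
        assume "Y \<tau>0 \<in> {2*pi/3..pi}"
        then have z: "2*pi/3 \<le> y" "y \<le> pi" by (auto simp: y_def)
        have "(C / \<theta> * b3 C \<theta> y) * (sin y + e) - b3 C \<theta> y * (1 - \<theta>' + 2 * cos y) > 0"
          by (rule pos3[OF z eb4 cstw(5,3)])
        then show "C / \<theta> * b3 C \<theta> (Y \<tau>0) * V + b3 C \<theta> (Y \<tau>0) * q > 0"
          by (simp add: V_def q_def y_def[symmetric] algebra_simps)
      qed
      have B5: "eventually (\<lambda>\<tau>. Y \<tau> \<in> {-pi..-2*pi/3} \<longrightarrow> Wt C \<theta> (Y \<tau>) * ex \<tau> > Wt C \<theta> (Y \<tau>0) * ex \<tau>0) (at \<tau>0 within {\<tau>0<..s1})"
      proof (rule BE[where f="\<lambda>z. b3 C \<theta> (- z)" and f'="\<lambda>z. - (C / \<theta> * b3 C \<theta> (- z))"])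
        show "\<And>z. z \<in> {-pi..-2*pi/3} \<Longrightarrow> Wt C \<theta> z = b3 C \<theta> (- z)" using W5 by auto
        have "((\<lambda>z. b3 C \<theta> (- z)) has_real_derivative C / \<theta> * b3 C \<theta> (- Y \<tau>0) * (- 1)) (at (Y \<tau>0))"
          by (rule DERIV_chain2[OF Db3[OF th0'] DERIV_minus[OF DERIV_ident]])
        then show "((\<lambda>z. b3 C \<theta> (- z)) has_real_derivative - (C / \<theta> * b3 C \<theta> (- Y \<tau>0))) (at (Y \<tau>0))" by simp
        assume "Y \<tau>0 \<in> {-pi..-2*pi/3}"
        then have z: "2*pi/3 \<le> - y" "- y \<le> pi" by (auto simp: y_def)
        have "(C / \<theta> * b3 C \<theta> (- y)) * (sin (- y) + (- e)) - b3 C \<theta> (- y) * (1 - \<theta>' + 2 * cos (- y)) > 0"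
          by (rule pos3[OF z _ cstw(5,3)]) (use eb4 in auto)
        moreover have "- (C / \<theta> * b3 C \<theta> (- Y \<tau>0)) * V + b3 C \<theta> (- Y \<tau>0) * q
           = (C / \<theta> * b3 C \<theta> (- y)) * (sin (- y) + (- e)) - b3 C \<theta> (- y) * (1 - \<theta>' + 2 * cos (- y))"
          unfolding V_def q_def y_def[symmetric] sin_minus cos_minus
          by (rule alg1)
        ultimately show "- (C / \<theta> * b3 C \<theta> (- Y \<tau>0)) * V + b3 C \<theta> (- Y \<tau>0) * q > 0" by simp
      qed
      have B4: "eventually (\<lambda>\<tau>. Y \<tau> \<in> {pi..pi+1} \<longrightarrow> Wt C \<theta> (Y \<tau>) * ex \<tau> > Wt C \<theta> (Y \<tau>0) * ex \<tau>0) (at \<tau>0 within {\<tau>0<..s1})"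
      proof (rule BE[where f="b4 C \<theta>" and f'="\<lambda>z. - (C / \<theta>) * b4 C \<theta> z"])
        show "\<And>z. z \<in> {pi..pi+1} \<Longrightarrow> Wt C \<theta> z = b4 C \<theta> z" using W4 by auto
        show "(b4 C \<theta> has_real_derivative - (C / \<theta>) * b4 C \<theta> (Y \<tau>0)) (at (Y \<tau>0))" by (rule Db4[OF th0'])
        assume "Y \<tau>0 \<in> {pi..pi+1}"
        then have z: "pi \<le> y" "y \<le> pi + 1" by (auto simp: y_def)
        have "(- (C / \<theta>) * b4 C \<theta> y) * (sin y + e) - b4 C \<theta> y * (1 - \<theta>' + 2 * cos y) > 0"
          by (rule pos4[OF z eb5 cstw(5,4)])
        then show "- (C / \<theta>) * b4 C \<theta> (Y \<tau>0) * V + b4 C \<theta> (Y \<tau>0) * q > 0"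
          by (simp add: V_def q_def y_def[symmetric] algebra_simps)
      qed
      have B6: "eventually (\<lambda>\<tau>. Y \<tau> \<in> {-pi-1..-pi} \<longrightarrow> Wt C \<theta> (Y \<tau>) * ex \<tau> > Wt C \<theta> (Y \<tau>0) * ex \<tau>0) (at \<tau>0 within {\<tau>0<..s1})"
      proof (rule BE[where f="\<lambda>z. b4 C \<theta> (- z)" and f'="\<lambda>z. C / \<theta> * b4 C \<theta> (- z)"])
        show "\<And>z. z \<in> {-pi-1..-pi} \<Longrightarrow> Wt C \<theta> z = b4 C \<theta> (- z)" using W6 by auto
        have "((\<lambda>z. b4 C \<theta> (- z)) has_real_derivative - (C / \<theta>) * b4 C \<theta> (- Y \<tau>0) * (- 1)) (at (Y \<tau>0))"
          by (rule DERIV_chain2[OF Db4[OF th0'] DERIV_minus[OF DERIV_ident]])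
        then show "((\<lambda>z. b4 C \<theta> (- z)) has_real_derivative C / \<theta> * b4 C \<theta> (- Y \<tau>0)) (at (Y \<tau>0))" by simp
        assume "Y \<tau>0 \<in> {-pi-1..-pi}"
        then have z: "pi \<le> - y" "- y \<le> pi + 1" by (auto simp: y_def)
        have "(- (C / \<theta>) * b4 C \<theta> (- y)) * (sin (- y) + (- e)) - b4 C \<theta> (- y) * (1 - \<theta>' + 2 * cos (- y)) > 0"
          by (rule pos4[OF z _ cstw(5,4)]) (use eb5 in auto)
        moreover have "C / \<theta> * b4 C \<theta> (- Y \<tau>0) * V + b4 C \<theta> (- Y \<tau>0) * q
           = (- (C / \<theta>) * b4 C \<theta> (- y)) * (sin (- y) + (- e)) - b4 C \<theta> (- y) * (1 - \<theta>' + 2 * cos (- y))"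
          unfolding V_def q_def y_def[symmetric] sin_minus cos_minus
          by (rule alg2)
        ultimately show "C / \<theta> * b4 C \<theta> (- Y \<tau>0) * V + b4 C \<theta> (- Y \<tau>0) * q > 0" by simp
      qed
      have B0: "eventually (\<lambda>\<tau>. Y \<tau> \<in> {- pi - 1 <..< pi + 1}) (at \<tau>0 within {\<tau>0<..s1})"
      proof -
        have "continuous (at \<tau>0 within {s0..s1}) Y" using Ycont tt by (simp add: continuous_on_eq_continuous_within)
        then have "(Y \<longlongrightarrow> Y \<tau>0) (at \<tau>0 within {s0..s1})" by (simp add: continuous_within)
        moreover have "Y \<tau>0 \<in> {- pi - 1 <..< pi + 1}" using yb by (auto simp: y_def)
        ultimately have "eventually (\<lambda>\<tau>. Y \<tau> \<in> {- pi - 1 <..< pi + 1}) (at \<tau>0 within {s0..s1})"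
          by (intro topological_tendstoD) auto
        then show ?thesis by (rule filter_leD[OF at_le, rotated]) (use \<tau>0 in auto)
      qed
      have "eventually (\<lambda>\<tau>. Wt C \<theta> (Y \<tau>) * ex \<tau> > Wt C \<theta> (Y \<tau>0) * ex \<tau>0) (at \<tau>0 within {\<tau>0<..s1})"
        using B0 B1 B2 B3 B4 B5 B6
      proof eventually_elim
        case (elim \<tau>)
        have "Y \<tau> \<in> {0..2*pi/3} \<or> Y \<tau> \<in> {-2*pi/3..0} \<or> Y \<tau> \<in> {2*pi/3..pi} \<or> Y \<tau> \<in> {pi..pi+1}
            \<or> Y \<tau> \<in> {-pi..-2*pi/3} \<or> Y \<tau> \<in> {-pi-1..-pi}" using elim(1) by auto
        then show ?case using elim by blast
      qed
      then show ?thesis by (rule eventually_mono) simp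
    qed
  qed (use t in auto)
  then show ?thesis by (simp add: ex_def P_def)
qed

end

context weights begin

lemma u_bound:
  assumes Y: "full Y" and sol: "is_Sbar_solution \<eta> s0 s1 {- pi - x0 .. pi - x0} u0 u"
    and good: "\<bar>u0 (Y s0)\<bar> \<le> M * Wt C \<theta> (Y s0)" and M0: "M \<ge> 0" and t: "t \<in> {s0..s1}"
  shows "\<bar>u t (Y t)\<bar> \<le> exp (- (1 - \<theta>') * (t - s0)) * M * Wt C \<theta> (Y t)"
proof -
  have Yc: "charac \<eta> s0 s1 Y" and Y0: "Y s0 \<in> {- pi - x0 .. pi - x0}" using Y by (auto simp: full_def)
  have Ycont: "continuous_on {s0..s1} Y" by (rule charac_cont[OF Yc])
  have init: "u s0 (Y s0) = u0 (Y s0)"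
    and ud: "\<And>\<tau>. \<tau> \<in> {s0..s1} \<Longrightarrow> ((\<lambda>\<tau>. u \<tau> (Y \<tau>)) has_real_derivative (2 * cos (Y \<tau>) * u \<tau> (Y \<tau>))) (at \<tau> within {s0..s1})"
    using sol Yc Y0 unfolding is_Sbar_solution_def by blast+
  define P where "P \<tau> = integral {s0..\<tau>} (\<lambda>r. 2 * cos (Y r))" for \<tau>
  have cosc: "continuous_on {s0..s1} (\<lambda>r. 2 * cos (Y r))" by (intro continuous_intros Ycont)
  have Pd: "(P has_real_derivative 2 * cos (Y \<tau>)) (at \<tau> within {s0..s1})" if "\<tau> \<in> {s0..s1}" for \<tau>
    unfolding P_def by (rule integral_has_real_derivative[OF cosc that])
  define h where "h \<tau> = u \<tau> (Y \<tau>) * exp (- P \<tau>)" for \<tau>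
  have hd: "(h has_real_derivative 0) (at \<tau> within {s0..s1})" if \<tau>: "\<tau> \<in> {s0..s1}" for \<tau>
  proof -
    have e: "((\<lambda>\<tau>. exp (- P \<tau>)) has_real_derivative exp (- P \<tau>) * (- (2 * cos (Y \<tau>)))) (at \<tau> within {s0..s1})"
      by (rule DERIV_chain2[OF DERIV_exp DERIV_minus[OF Pd[OF \<tau>]]])
    have "(h has_real_derivative (2 * cos (Y \<tau>) * u \<tau> (Y \<tau>)) * exp (- P \<tau>) + exp (- P \<tau>) * (- (2 * cos (Y \<tau>))) * u \<tau> (Y \<tau>)) (at \<tau> within {s0..s1})"
      unfolding h_def by (rule DERIV_mult[OF ud[OF \<tau>] e])
    then show ?thesis by (simp add: algebra_simps)
  qed
  have "h s0 \<le> h t" by (rule mono_within[OF _ _ _ hd]) (use t in auto)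
  moreover have "- h s0 \<le> - h t"
    by (rule mono_within[where f="\<lambda>\<tau>. - h \<tau>" and f'="\<lambda>_. 0"]) (use t hd in \<open>auto intro: DERIV_minus[where D=0, simplified]\<close>)
  ultimately have "h t = h s0" by simp
  then have ut: "u t (Y t) = u0 (Y s0) * exp (P t)"
    using init by (simp add: h_def P_def exp_minus field_simps)
  have mm: "Wt C \<theta> (Y s0) * exp (- (1 - \<theta>') * (s0 - s0) - integral {s0..s0} (\<lambda>r. 2 * cos (Y r)))
       \<le> Wt C \<theta> (Y t) * exp (- (1 - \<theta>') * (t - s0) - integral {s0..t} (\<lambda>r. 2 * cos (Y r)))"
    by (rule main_mono[OF Y t])
  then have "Wt C \<theta> (Y s0) \<le> Wt C \<theta> (Y t) * exp (- (1 - \<theta>') * (t - s0) - P t)"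
    by (simp add: P_def)
  then have "Wt C \<theta> (Y s0) * exp (P t) \<le> Wt C \<theta> (Y t) * exp (- (1 - \<theta>') * (t - s0) - P t) * exp (P t)"
    by (intro mult_right_mono) auto
  also have "\<dots> = Wt C \<theta> (Y t) * exp (- (1 - \<theta>') * (t - s0))"
    by (simp add: mult.assoc exp_add[symmetric])
  finally have W: "Wt C \<theta> (Y s0) * exp (P t) \<le> Wt C \<theta> (Y t) * exp (- (1 - \<theta>') * (t - s0))" .
  have "\<bar>u t (Y t)\<bar> = \<bar>u0 (Y s0)\<bar> * exp (P t)" unfolding ut by (simp add: abs_mult)
  also have "\<dots> \<le> M * Wt C \<theta> (Y s0) * exp (P t)" using good by (intro mult_right_mono) auto
  also have "\<dots> = M * (Wt C \<theta> (Y s0) * exp (P t))" by simp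
  also have "\<dots> \<le> M * (Wt C \<theta> (Y t) * exp (- (1 - \<theta>') * (t - s0)))" using W M0 by (intro mult_left_mono)
  finally show ?thesis by (simp add: algebra_simps)
qed

lemma M_nonneg:
  assumes ae: "AE y in lborel. y \<in> {- pi - x0 .. pi - x0} \<longrightarrow> \<bar>u0 y\<bar> \<le> M * Wt C \<theta> y"
  shows "M \<ge> 0"
proof (rule ccontr)
  assume "\<not> M \<ge> 0"
  then have M: "M < 0" by simp
  have "AE y in lborel. y \<notin> {1/2..(1::real)}"
    using ae
  proof eventually_elim
    case (elim y)
    show ?case
    proof
      assume y: "y \<in> {1/2..1}"
      have yin: "y \<in> {- pi - x0 .. pi - x0}" using y x0 dsmall pi_gt3 by auto
      have "Wt C \<theta> y = b1 C \<theta> y" using y pi_gt3 by (intro W1) auto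
      moreover have "b1 C \<theta> y > 0"
      proof -
        have "sin y > 0" using y pi_gt3 by (intro sin_gt_zero) auto
        moreover have "sin (y/2) > 0" using y pi_gt3 by (intro sin_gt_zero) auto
        ultimately show ?thesis by (simp add: b1_def)
      qed
      ultimately have "M * Wt C \<theta> y < 0" using M by (simp add: mult_neg_pos)
      then show False using elim yin by auto
    qed
  qed
  then show False using AE_interval_false[of "1/2" 1] by simp
qed

end

context weights begin

lemma final_AE:
  assumes sol: "is_Sbar_solution \<eta> s0 s1 {- pi - x0 .. pi - x0} u0 u"
    and ae0: "AE y in lborel. y \<in> {- pi - x0 .. pi - x0} \<longrightarrow> \<bar>u0 y\<bar> \<le> M * Wt C \<theta> y"
    and s: "s \<in> {s0..s1}"
  shows "AE y in lborel. y \<in> Omega_star \<eta> s0 s1 {- pi - x0 .. pi - x0} s \<longrightarrow>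
              \<bar>u s y\<bar> \<le> exp (- (1 - \<theta>') * (s - s0)) * M * Wt C \<theta> y"
proof -
  have M0: "M \<ge> 0" by (rule M_nonneg[OF ae0])
  obtain N where N: "{x \<in> space lborel. \<not> (x \<in> {- pi - x0 .. pi - x0} \<longrightarrow> \<bar>u0 x\<bar> \<le> M * Wt C \<theta> x)} \<subseteq> N"
      "emeasure lborel N = 0" "N \<in> sets lborel"
    using ae0 by (rule AE_E)
  define N0 where "N0 = {y0 \<in> {- pi - x0 .. pi - x0}. \<not> \<bar>u0 y0\<bar> \<le> M * Wt C \<theta> y0}"
  have "N \<in> null_sets lborel" using N by (simp add: null_setsI)
  then have "N \<in> null_sets lebesgue" by (rule null_sets_completionI)
  then have "negligible N" by (simp add: negligible_iff_null_sets)
  moreover have "N0 \<subseteq> N" using N(1) by (auto simp: N0_def)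
  ultimately have negN0: "negligible N0" by (rule negligible_subset)
  define S0 where "S0 = {y0 \<in> N0. \<exists>Y. full Y \<and> Y s0 = y0}"
  have negS0: "negligible S0" using negN0 by (rule negligible_subset) (auto simp: S0_def)
  define ch where "ch y0 = (SOME Y. full Y \<and> Y s0 = y0)" for y0
  have ch: "full (ch y0) \<and> ch y0 s0 = y0" if "y0 \<in> S0" for y0
  proof -
    have ex: "\<exists>Y. full Y \<and> Y s0 = y0" using that by (simp add: S0_def)
    show ?thesis using someI_ex[OF ex] unfolding ch_def .
  qed
  define fm where "fm y0 = ch y0 s" for y0
  define B where "B = exp ((1 + \<delta>) * (s - s0))"
  have negI: "negligible (fm ` S0)"
  proof (rule negligible_locally_Lipschitz_image[OF _ negS0])
    show "DIM(real) \<le> DIM(real)" by simp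
    fix x assume x: "x \<in> S0"
    show "\<exists>T B. open T \<and> x \<in> T \<and> (\<forall>y\<in>S0 \<inter> T. norm (fm y - fm x) \<le> B * norm (y - x))"
    proof (intro exI[of _ UNIV] exI[of _ B] conjI ballI)
      fix y assume "y \<in> S0 \<inter> UNIV"
      then have y: "y \<in> S0" by simp
      have "\<bar>ch y s - ch x s\<bar> \<le> exp ((1 + \<delta>) * (s - s0)) * \<bar>ch y s0 - ch x s0\<bar>"
        by (rule flow_lip[OF ch[OF y, THEN conjunct1] ch[OF x, THEN conjunct1] s])
      then show "norm (fm y - fm x) \<le> B * norm (y - x)"
        using ch[OF x] ch[OF y] by (simp add: fm_def B_def)
    qed auto
  qed
  define Bad where "Bad = {y \<in> Omega_star \<eta> s0 s1 {- pi - x0 .. pi - x0} s.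
              \<not> \<bar>u s y\<bar> \<le> exp (- (1 - \<theta>') * (s - s0)) * M * Wt C \<theta> y}"
  have "Bad \<subseteq> fm ` S0"
  proof
    fix y assume "y \<in> Bad"
    then obtain Y where Y: "charac \<eta> s0 s1 Y" "Y s0 \<in> {- pi - x0 .. pi - x0}" "y = Y s"
      and bad: "\<not> \<bar>u s y\<bar> \<le> exp (- (1 - \<theta>') * (s - s0)) * M * Wt C \<theta> y"
      unfolding Bad_def Omega_star_def by blast
    have fY: "full Y" using Y by (simp add: full_def)
    have "Y s0 \<in> N0"
    proof (rule ccontr)
      assume "Y s0 \<notin> N0"
      then have "\<bar>u0 (Y s0)\<bar> \<le> M * Wt C \<theta> (Y s0)" using Y(2) by (auto simp: N0_def)
      then have "\<bar>u s (Y s)\<bar> \<le> exp (- (1 - \<theta>') * (s - s0)) * M * Wt C \<theta> (Y s)"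
        by (rule u_bound[OF fY sol _ M0 s])
      then show False using bad Y(3) by simp
    qed
    then have S: "Y s0 \<in> S0" using fY by (auto simp: S0_def)
    have "\<bar>ch (Y s0) s - Y s\<bar> \<le> exp ((1 + \<delta>) * (s - s0)) * \<bar>ch (Y s0) s0 - Y s0\<bar>"
      by (rule flow_lip[OF ch[OF S, THEN conjunct1] fY s])
    then have "fm (Y s0) = y" using ch[OF S] Y(3) by (simp add: fm_def)
    then show "y \<in> fm ` S0" using S by blast
  qed
  then have "negligible Bad" using negI by (rule negligible_subset[rotated])
  then have "Bad \<in> null_sets lebesgue" by (simp add: negligible_iff_null_sets)
  then have "AE y in lebesgue. y \<notin> Bad" by (rule AE_not_in)
  then have "AE y in lborel. y \<notin> Bad" by (simp add: AE_completion_iff)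
  then show ?thesis by (rule eventually_mono) (auto simp: Bad_def)
qed

end

theorem lemma3p5:
  "\<exists>C0>0. \<forall>C\<ge>C0. \<forall>\<theta> \<theta>'. 0 < \<theta> \<and> \<theta> < \<theta>' \<and> \<theta>' < 1 \<longrightarrow>
    (\<exists>\<delta>0>0. \<forall>\<delta>. 0 < \<delta> \<and> \<delta> \<le> \<delta>0 \<longrightarrow>
      (\<forall>(s0::real) s1 (\<eta>::real \<Rightarrow> real \<Rightarrow> real) (xs::real \<Rightarrow> real)
          (u0::real \<Rightarrow> real) (u::real \<Rightarrow> real \<Rightarrow> real) (M::real).
         0 \<le> s0 \<and> s0 \<le> s1 \<and>
         continuous_on ({s0..s1} \<times> UNIV) (\<lambda>(s, y). \<eta> s y) \<and>
         (\<forall>s\<in>{s0..s1}. (xs has_real_derivative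
              (- sin (xs s) + oint (- pi - xs s) 0 (\<eta> s))) (at s within {s0..s1})) \<and>
         (\<forall>s\<in>{s0..s1}. \<bar>xs s\<bar> \<le> \<delta>) \<and>
         (\<forall>s\<in>{s0..s1}. AE y in lborel.
              y \<in> Omega_star \<eta> s0 s1 {- pi - xs s0 .. pi - xs s0} s \<longrightarrow> \<bar>\<eta> s y\<bar> \<le> \<delta>) \<and>
         is_Sbar_solution \<eta> s0 s1 {- pi - xs s0 .. pi - xs s0} u0 u \<and>
         (AE y in lborel. y \<in> {- pi - xs s0 .. pi - xs s0} \<longrightarrow> \<bar>u0 y\<bar> \<le> M * Wt C \<theta> y)
         \<longrightarrow>
         (\<forall>s\<in>{s0..s1}. AE y in lborel.
              y \<in> Omega_star \<eta> s0 s1 {- pi - xs s0 .. pi - xs s0} s \<longrightarrow>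
              \<bar>u s y\<bar> \<le> exp (- (1 - \<theta>') * (s - s0)) * M * Wt C \<theta> y)))"
proof (rule exI[of _ "1::real"], intro conjI allI impI)
  show "(0::real) < 1" by simp
  fix C \<theta> \<theta>' :: real
  assume C: "1 \<le> C" and th: "0 < \<theta> \<and> \<theta> < \<theta>' \<and> \<theta>' < 1"
  define \<delta>0 where "\<delta>0 = \<theta> * \<theta>' / (100 * C)"
  have d0: "\<delta>0 > 0" using C th by (simp add: \<delta>0_def)
  have d01: "\<delta>0 \<le> 1/100"
  proof -
    have "\<theta> * \<theta>' \<le> 1 * 1" using th by (intro mult_mono) auto
    also have "\<dots> \<le> C" using C by simp
    finally have "\<theta> * \<theta>' / (100 * C) \<le> C / (100 * C)" using C by (intro divide_right_mono) auto
    then show ?thesis using C by (simp add: \<delta>0_def)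
  qed
  show "\<exists>\<delta>0>0. \<forall>\<delta>. 0 < \<delta> \<and> \<delta> \<le> \<delta>0 \<longrightarrow>
      (\<forall>(s0::real) s1 (\<eta>::real \<Rightarrow> real \<Rightarrow> real) (xs::real \<Rightarrow> real)
          (u0::real \<Rightarrow> real) (u::real \<Rightarrow> real \<Rightarrow> real) (M::real).
         0 \<le> s0 \<and> s0 \<le> s1 \<and>
         continuous_on ({s0..s1} \<times> UNIV) (\<lambda>(s, y). \<eta> s y) \<and>
         (\<forall>s\<in>{s0..s1}. (xs has_real_derivative
              (- sin (xs s) + oint (- pi - xs s) 0 (\<eta> s))) (at s within {s0..s1})) \<and>
         (\<forall>s\<in>{s0..s1}. \<bar>xs s\<bar> \<le> \<delta>) \<and>
         (\<forall>s\<in>{s0..s1}. AE y in lborel.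
              y \<in> Omega_star \<eta> s0 s1 {- pi - xs s0 .. pi - xs s0} s \<longrightarrow> \<bar>\<eta> s y\<bar> \<le> \<delta>) \<and>
         is_Sbar_solution \<eta> s0 s1 {- pi - xs s0 .. pi - xs s0} u0 u \<and>
         (AE y in lborel. y \<in> {- pi - xs s0 .. pi - xs s0} \<longrightarrow> \<bar>u0 y\<bar> \<le> M * Wt C \<theta> y)
         \<longrightarrow>
         (\<forall>s\<in>{s0..s1}. AE y in lborel.
              y \<in> Omega_star \<eta> s0 s1 {- pi - xs s0 .. pi - xs s0} s \<longrightarrow>
              \<bar>u s y\<bar> \<le> exp (- (1 - \<theta>') * (s - s0)) * M * Wt C \<theta> y))"
  proof (intro exI[of _ \<delta>0] conjI allI impI d0)
    fix \<delta> :: real and s0 s1 :: real and \<eta> :: "real \<Rightarrow> real \<Rightarrow> real" and xs u0 :: "real \<Rightarrow> real"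
      and u :: "real \<Rightarrow> real \<Rightarrow> real" and M :: real
    assume d: "0 < \<delta> \<and> \<delta> \<le> \<delta>0"
    assume H: "0 \<le> s0 \<and> s0 \<le> s1 \<and>
         continuous_on ({s0..s1} \<times> UNIV) (\<lambda>(s, y). \<eta> s y) \<and>
         (\<forall>s\<in>{s0..s1}. (xs has_real_derivative
              (- sin (xs s) + oint (- pi - xs s) 0 (\<eta> s))) (at s within {s0..s1})) \<and>
         (\<forall>s\<in>{s0..s1}. \<bar>xs s\<bar> \<le> \<delta>) \<and>
         (\<forall>s\<in>{s0..s1}. AE y in lborel.
              y \<in> Omega_star \<eta> s0 s1 {- pi - xs s0 .. pi - xs s0} s \<longrightarrow> \<bar>\<eta> s y\<bar> \<le> \<delta>) \<and>
         is_Sbar_solution \<eta> s0 s1 {- pi - xs s0 .. pi - xs s0} u0 u \<and>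
         (AE y in lborel. y \<in> {- pi - xs s0 .. pi - xs s0} \<longrightarrow> \<bar>u0 y\<bar> \<le> M * Wt C \<theta> y)"
    then have s01: "s0 \<le> s1" and cont: "continuous_on ({s0..s1} \<times> UNIV) (\<lambda>(s, y). \<eta> s y)"
      and xsb: "\<forall>s\<in>{s0..s1}. \<bar>xs s\<bar> \<le> \<delta>"
      and etab: "\<forall>s\<in>{s0..s1}. AE y in lborel.
              y \<in> Omega_star \<eta> s0 s1 {- pi - xs s0 .. pi - xs s0} s \<longrightarrow> \<bar>\<eta> s y\<bar> \<le> \<delta>"
      and sol: "is_Sbar_solution \<eta> s0 s1 {- pi - xs s0 .. pi - xs s0} u0 u"
      and ae0: "AE y in lborel. y \<in> {- pi - xs s0 .. pi - xs s0} \<longrightarrow> \<bar>u0 y\<bar> \<le> M * Wt C \<theta> y"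
      by blast+
    interpret W: weights \<eta> s0 s1 "xs s0" \<delta> C \<theta> \<theta>'
    proof unfold_locales
      show "s0 \<le> s1" by fact
      show "continuous_on ({s0..s1} \<times> UNIV) (\<lambda>(s, y). \<eta> s y)" by fact
      show "\<bar>xs s0\<bar> \<le> \<delta>" using xsb s01 by auto
      show "0 < \<delta>" using d by simp
      show "\<delta> \<le> 1/100" using d d01 by simp
      show "\<forall>s\<in>{s0..s1}. AE y in lborel.
              y \<in> Omega_star \<eta> s0 s1 {- pi - xs s0 .. pi - xs s0} s \<longrightarrow> \<bar>\<eta> s y\<bar> \<le> \<delta>" by fact
      show "1 \<le> C" by fact
      show "0 < \<theta>" "\<theta> < \<theta>'" "\<theta>' < 1" using th by auto
      show "\<delta> \<le> \<theta> * \<theta>' / (100 * C)" using d by (simp add: \<delta>0_def)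
    qed
    show "\<forall>s\<in>{s0..s1}. AE y in lborel.
              y \<in> Omega_star \<eta> s0 s1 {- pi - xs s0 .. pi - xs s0} s \<longrightarrow>
              \<bar>u s y\<bar> \<le> exp (- (1 - \<theta>') * (s - s0)) * M * Wt C \<theta> y"
      using W.final_AE[OF sol ae0] by blast
  qed
qed


end
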